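(* Let $V,W$ be finite-dimensional real vector spaces and let $\mathcal{R}=(\mathcal{R}^0,\mathcal{R}^1,\dots)$ be a sequence in $\mathscr{P}(V;W)$. If $\mathrm{Kern}(\mathrm{Eval}_{\mathcal{R}})$ is an ideal of $\mathscr{P}(V)[\lambda]$, then $P_{\min}(\mathcal{R})\in\mathscr{P}(V)[\lambda]$ and $$\mathrm{Kern}(\mathrm{Eval}_{\mathcal{R}})=\mathscr{P}(V)[\lambda]\cdot P_{\min}(\mathcal{R}).$$
   Context: $\mathscr{P}(V)$ and $\mathscr{F}(V)$ are the rings of real polynomial and rational functions on $V$. $\mathscr{P}(V;W)$ and $\mathscr{F}(V;W)$ are the modules of $W$-valued polynomial and rational functions. $\mathscr{A}_j(\mathcal{R})=\{X\in V: \mathcal{R}^0(X),\dots,\mathcal{R}^j(X)\text{ linearly dependent in }W\}$. Let $k\ge0$ be the smallest integer with $\mathscr{A}_k(\mathcal{R})=V$. Then $P_{\min}(\mathcal{R})=\lambda^k+\sum_{i=1}^k a_i\lambda^{k-i}$, where $a_i\in\mathscr{F}(V)$ are the unique rational functions with $\mathcal{R}^k=-\sum_{i=1}^k a_i\mathcal{R}^{k-i}$ in $\mathscr{F}(V;W)$. $\mathrm{Eval}_{\mathcal{R}}\colon\mathscr{P}(V)[\lambda]\to\mathscr{P}(V;W)$ is the unique $\mathscr{P}(V)$-module homomorphism with $\lambda^i\mapsto\mathcal{R}^i$. *)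

theory Defs
  imports "HOL-Analysis.Analysis"
begin

text \<open>P(V): real polynomial functions on a finite-dimensional real vector space V
  (modelled by a euclidean_space): the smallest algebra of functions containing the
  constants and the linear functionals.\<close>
inductive polyfun :: "('a::euclidean_space \<Rightarrow> real) \<Rightarrow> bool" where
  const: "polyfun (\<lambda>x. c)"
| lin: "polyfun (\<lambda>x. x \<bullet> b)"
| add: "polyfun f \<Longrightarrow> polyfun g \<Longrightarrow> polyfun (\<lambda>x. f x + g x)"
| mult: "polyfun f \<Longrightarrow> polyfun g \<Longrightarrow> polyfun (\<lambda>x. f x * g x)"

definition polyfun_vec :: "('a::euclidean_space \<Rightarrow> 'b::euclidean_space) \<Rightarrow> bool" where
  "polyfun_vec f \<longleftrightarrow> (\<forall>b\<in>Basis. polyfun (\<lambda>x. f x \<bullet> b))"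

text \<open>P(V)[lambda]: coefficient sequences with polynomial coefficients and finite support;
  c i is the coefficient of lambda^i.\<close>
definition polyseq :: "(nat \<Rightarrow> 'a::euclidean_space \<Rightarrow> real) set" where
  "polyseq = {c. (\<forall>i. polyfun (c i)) \<and> finite {i. c i \<noteq> (\<lambda>_. 0)}}"

definition pzero :: "nat \<Rightarrow> 'a \<Rightarrow> real" where
  "pzero = (\<lambda>i x. 0)"

definition padd :: "(nat \<Rightarrow> 'a \<Rightarrow> real) \<Rightarrow> (nat \<Rightarrow> 'a \<Rightarrow> real) \<Rightarrow> nat \<Rightarrow> 'a \<Rightarrow> real" where
  "padd c d = (\<lambda>i x. c i x + d i x)"

definition pmul :: "(nat \<Rightarrow> 'a \<Rightarrow> real) \<Rightarrow> (nat \<Rightarrow> 'a \<Rightarrow> real) \<Rightarrow> nat \<Rightarrow> 'a \<Rightarrow> real" where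
  "pmul c d = (\<lambda>n x. \<Sum>i\<le>n. c i x * d (n - i) x)"

definition is_ideal :: "(nat \<Rightarrow> 'a::euclidean_space \<Rightarrow> real) set \<Rightarrow> bool" where
  "is_ideal I \<longleftrightarrow> I \<subseteq> polyseq \<and> pzero \<in> I \<and> (\<forall>c\<in>I. \<forall>d\<in>I. padd c d \<in> I)
     \<and> (\<forall>d\<in>polyseq. \<forall>c\<in>I. pmul d c \<in> I)"

definition Eval :: "(nat \<Rightarrow> 'a \<Rightarrow> 'b::real_vector) \<Rightarrow> (nat \<Rightarrow> 'a \<Rightarrow> real) \<Rightarrow> 'a \<Rightarrow> 'b" where
  "Eval R c = (\<lambda>x. \<Sum>i\<in>{i. c i \<noteq> (\<lambda>_. 0)}. c i x *\<^sub>R R i x)"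

definition Kern_Eval :: "(nat \<Rightarrow> 'a::euclidean_space \<Rightarrow> 'b::euclidean_space) \<Rightarrow> (nat \<Rightarrow> 'a \<Rightarrow> real) set" where
  "Kern_Eval R = {c \<in> polyseq. Eval R c = (\<lambda>_. 0)}"

definition A_set :: "(nat \<Rightarrow> 'a \<Rightarrow> 'b::real_vector) \<Rightarrow> nat \<Rightarrow> 'a set" where
  "A_set R j = {X. \<exists>c::nat \<Rightarrow> real. (\<exists>i\<le>j. c i \<noteq> 0) \<and> (\<Sum>i\<le>j. c i *\<^sub>R R i X) = 0}"

definition kmin :: "(nat \<Rightarrow> 'a \<Rightarrow> 'b::real_vector) \<Rightarrow> nat" where
  "kmin R = (LEAST k. A_set R k = UNIV)"

text \<open>Rational functions F(V) represented as quotients p/q of polynomial functions, q nonzero.\<close>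
definition ratfun :: "('a::euclidean_space \<Rightarrow> real) \<times> ('a \<Rightarrow> real) \<Rightarrow> bool" where
  "ratfun a \<longleftrightarrow> polyfun (fst a) \<and> polyfun (snd a) \<and> snd a \<noteq> (\<lambda>_. 0)"

text \<open>The identity R^k = - sum_{i=1}^k a_i R^(k-i) in F(V;W), with a_i = p_i/q_i,
  after multiplying by the (nonzero) common denominator prod_i q_i.\<close>
definition minrel :: "(nat \<Rightarrow> 'a \<Rightarrow> 'b::real_vector) \<Rightarrow> nat
     \<Rightarrow> (nat \<Rightarrow> ('a \<Rightarrow> real) \<times> ('a \<Rightarrow> real)) \<Rightarrow> bool" where
  "minrel R k a \<longleftrightarrow> (\<forall>x. (\<Prod>i\<in>{1..k}. snd (a i) x) *\<^sub>R R k x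
      + (\<Sum>i\<in>{1..k}. (fst (a i) x * (\<Prod>j\<in>{1..k}-{i}. snd (a j) x)) *\<^sub>R R (k - i) x) = 0)"

text \<open>Coefficient sequence of lambda^k + sum_{i=1}^k r_i lambda^(k-i).\<close>
definition monic_seq :: "nat \<Rightarrow> (nat \<Rightarrow> 'a \<Rightarrow> real) \<Rightarrow> nat \<Rightarrow> 'a \<Rightarrow> real" where
  "monic_seq k r = (\<lambda>j x. if j = k then 1 else if j < k then r (k - j) x else 0)"

end

theory Submission
  imports Defs "HOL-Computational_Algebra.Polynomial_Factorial" "HOL-Computational_Algebra.Field_as_Ring"
begin


lemma pf_const: "polyfun (\<lambda>x. c)" by (rule polyfun.const)
lemma pf_add: "polyfun f \<Longrightarrow> polyfun g \<Longrightarrow> polyfun (\<lambda>x. f x + g x)" by (rule polyfun.add)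
lemma pf_mult: "polyfun f \<Longrightarrow> polyfun g \<Longrightarrow> polyfun (\<lambda>x. f x * g x)" by (rule polyfun.mult)
lemma pf_uminus: "polyfun f \<Longrightarrow> polyfun (\<lambda>x. - f x)"
  using pf_mult[OF pf_const[of "-1"]] by simp
lemma pf_diff: "polyfun f \<Longrightarrow> polyfun g \<Longrightarrow> polyfun (\<lambda>x. f x - g x)"
  using pf_add[OF _ pf_uminus] by simp

lemma pf_sum: "(\<And>i. i \<in> S \<Longrightarrow> polyfun (f i)) \<Longrightarrow> polyfun (\<lambda>x. \<Sum>i\<in>S. f i x)"
proof (induction S rule: infinite_finite_induct)
  case (infinite A) then show ?case by (simp add: pf_const)
next
  case empty then show ?case by (simp add: pf_const)
next
  case (insert a A) then show ?case by (simp add: pf_add)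
qed

lemma pf_prod: "(\<And>i. i \<in> S \<Longrightarrow> polyfun (f i)) \<Longrightarrow> polyfun (\<lambda>x. \<Prod>i\<in>S. f i x)"
proof (induction S rule: infinite_finite_induct)
  case (infinite A) then show ?case by (simp add: pf_const)
next
  case empty then show ?case by (simp add: pf_const)
next
  case (insert a A) then show ?case by (simp add: pf_mult)
qed

lemma pf_pow: "polyfun f \<Longrightarrow> polyfun (\<lambda>x. f x ^ n)"
  by (induction n) (simp_all add: pf_const pf_mult)

lemma pfv_comp: "polyfun_vec f \<Longrightarrow> b \<in> Basis \<Longrightarrow> polyfun (\<lambda>x. f x \<bullet> b)"
  by (simp add: polyfun_vec_def)

lemma pf_inner: assumes "polyfun_vec f" "polyfun_vec g"
  shows "polyfun (\<lambda>x. f x \<bullet> g x)"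
proof -
  have "(\<lambda>x. f x \<bullet> g x) = (\<lambda>x. \<Sum>b\<in>Basis. (f x \<bullet> b) * (g x \<bullet> b))"
    by (rule ext, rule euclidean_inner)
  moreover have "polyfun (\<lambda>x. \<Sum>b\<in>Basis. (f x \<bullet> b) * (g x \<bullet> b))"
    by (rule pf_sum, rule pf_mult) (use assms in \<open>auto simp: polyfun_vec_def\<close>)
  ultimately show ?thesis by simp
qed

lemma pfv_add: "polyfun_vec f \<Longrightarrow> polyfun_vec g \<Longrightarrow> polyfun_vec (\<lambda>x. f x + g x)"
  by (simp add: polyfun_vec_def inner_add_left pf_add)
lemma pfv_diff: "polyfun_vec f \<Longrightarrow> polyfun_vec g \<Longrightarrow> polyfun_vec (\<lambda>x. f x - g x)"
  by (simp add: polyfun_vec_def inner_diff_left pf_diff)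
lemma pfv_scale: "polyfun c \<Longrightarrow> polyfun_vec f \<Longrightarrow> polyfun_vec (\<lambda>x. c x *\<^sub>R f x)"
  by (simp add: polyfun_vec_def pf_mult)
lemma pfv_zero: "polyfun_vec (\<lambda>x. 0)"
  by (simp add: polyfun_vec_def pf_const)
lemma pfv_sum: "(\<And>i. i \<in> S \<Longrightarrow> polyfun_vec (f i)) \<Longrightarrow> polyfun_vec (\<lambda>x. \<Sum>i\<in>S. f i x)"
  unfolding polyfun_vec_def by (auto simp: inner_sum_left intro!: pf_sum)

lemma pf_line: "polyfun f \<Longrightarrow> \<exists>p. \<forall>t. f (y + t *\<^sub>R v) = poly p t"
proof (induction rule: polyfun.induct)
  case (const c) then show ?case by (intro exI[of _ "[:c:]"]) simp
next
  case (lin b) then show ?case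
    by (intro exI[of _ "[:y \<bullet> b, v \<bullet> b:]"]) (simp add: inner_add_left algebra_simps)
next
  case (add f g) then obtain p q where "\<forall>t. f (y + t *\<^sub>R v) = poly p t" "\<forall>t. g (y + t *\<^sub>R v) = poly q t" by blast
  then show ?case by (intro exI[of _ "p + q"]) simp
next
  case (mult f g) then obtain p q where "\<forall>t. f (y + t *\<^sub>R v) = poly p t" "\<forall>t. g (y + t *\<^sub>R v) = poly q t" by blast
  then show ?case by (intro exI[of _ "p * q"]) simp
qed

lemma pf_domain:
  assumes "polyfun f" "polyfun g" "\<And>x. f x * g x = 0" "f x1 \<noteq> 0"
  shows "g x = 0"
proof -
  obtain p where p: "\<forall>t. f (x1 + t *\<^sub>R (x - x1)) = poly p t" using pf_line[OF assms(1)] by blast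
  obtain q where q: "\<forall>t. g (x1 + t *\<^sub>R (x - x1)) = poly q t" using pf_line[OF assms(2)] by blast
  have "poly (p * q) t = poly 0 t" for t
  proof -
    have "poly (p * q) t = f (x1 + t *\<^sub>R (x - x1)) * g (x1 + t *\<^sub>R (x - x1))" using p q by simp
    then show ?thesis using assms(3) by simp
  qed
  then have "poly (p * q) = poly 0" by blast
  then have "p * q = 0" using poly_eq_poly_eq_iff by blast
  moreover have "p \<noteq> 0" using p[rule_format, of 0] assms(4) by auto
  ultimately have "q = 0" by simp
  then show ?thesis using q[rule_format, of 1] by simp
qed

lemma pf_domain':
  assumes "polyfun f" "polyfun g" "\<And>x. f x * g x = 0" "f \<noteq> (\<lambda>_. 0)"
  shows "g = (\<lambda>_. 0)"
proof -
  obtain x1 where "f x1 \<noteq> 0" using assms(4) by auto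
  then show ?thesis using pf_domain[OF assms(1-3)] by auto
qed

lemma pfv_domain:
  assumes "polyfun f" "polyfun_vec G" "\<And>x. f x *\<^sub>R G x = 0" "f x1 \<noteq> 0"
  shows "G x = 0"
proof -
  have "G x \<bullet> b = 0" if b: "b \<in> Basis" for b
  proof -
    have "f y * (G y \<bullet> b) = 0" for y using assms(3)[of y]
      by (metis inner_scaleR_left inner_zero_left)
    then show ?thesis using pf_domain[OF assms(1) pfv_comp[OF assms(2) b] _ assms(4)] by blast
  qed
  then show ?thesis by (metis euclidean_all_zero_iff)
qed


lemma gauss_rec:
  fixes q W :: "nat \<Rightarrow> real poly"
  assumes qk: "q k \<noteq> 0" and k1: "k \<ge> 1" and W0: "\<And>n. n < k - 1 \<Longrightarrow> W n = 0"
    and Wk: "W (k - 1) \<noteq> 0" and rec: "\<And>s. (\<Sum>i\<le>k. q i * W (i + s)) = 0"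
    and ik: "i \<le> k"
  shows "q k dvd q i"
proof (cases "q i = 0")
  case True then show ?thesis by simp
next
  case qi: False
  show ?thesis
  proof (rule multiplicity_le_imp_dvd[OF qk])
    fix p :: "real poly" assume p: "prime p"
    then have pnu: "\<not> is_unit p" by (simp add: prime_elem_not_unit prime_def)
    have pe: "prime_elem p" using p by simp
    define A where "A j = (if j \<le> k then q (k - j) else 0)" for j
    define AS where "AS = {multiplicity p (A j) | j. j \<le> k \<and> A j \<noteq> 0}"
    have A0: "A 0 = q k" by (simp add: A_def)
    have ASne: "multiplicity p (A 0) \<in> AS" using qk A0 unfolding AS_def by (metis (mono_tags, lifting) le0 mem_Collect_eq)
    have ASfin: "finite AS" unfolding AS_def by simp
    define a where "a = Min AS"
    have a_le: "a \<le> multiplicity p (A j)" if "j \<le> k" "A j \<noteq> 0" for j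
      unfolding a_def using that ASfin by (intro Min_le) (auto simp: AS_def)
    have "a \<in> AS" unfolding a_def using ASfin ASne by (intro Min_in) auto
    then have ex_j: "\<exists>j. j \<le> k \<and> A j \<noteq> 0 \<and> multiplicity p (A j) = a" unfolding AS_def by auto
    define j0 where "j0 = (LEAST j. j \<le> k \<and> A j \<noteq> 0 \<and> multiplicity p (A j) = a)"
    have j0: "j0 \<le> k" "A j0 \<noteq> 0" "multiplicity p (A j0) = a"
      using LeastI_ex[OF ex_j] unfolding j0_def by auto
    have j0_less: "\<not> (j \<le> k \<and> A j \<noteq> 0 \<and> multiplicity p (A j) = a)" if "j < j0" for j
      using not_less_Least[of j] that unfolding j0_def by blast
    have dvdA: "p ^ a dvd A j" for j
    proof (cases "j \<le> k \<and> A j \<noteq> 0")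
      case True then show ?thesis using a_le[of j] power_dvd_iff_le_multiplicity[of "A j" p a] pnu by auto
    next
      case False then show ?thesis by (auto simp: A_def)
    qed
    have dvdA1: "p ^ (a + 1) dvd A j" if "j < j0" for j
    proof (cases "j \<le> k \<and> A j \<noteq> 0")
      case True
      then have "a + 1 \<le> multiplicity p (A j)" using a_le[of j] j0_less[OF that] by auto
      then show ?thesis using True power_dvd_iff_le_multiplicity[of "A j" p "a+1"] pnu by auto
    next
      case False then show ?thesis by (auto simp: A_def)
    qed
    have ex_b: "\<exists>b n. W n \<noteq> 0 \<and> multiplicity p (W n) = b" using Wk by blast
    define b where "b = (LEAST b. \<exists>n. W n \<noteq> 0 \<and> multiplicity p (W n) = b)"
    have b_le: "b \<le> multiplicity p (W n)" if "W n \<noteq> 0" for n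
      unfolding b_def using that by (intro Least_le) blast
    have ex_n: "\<exists>n. W n \<noteq> 0 \<and> multiplicity p (W n) = b"
      using LeastI_ex[OF ex_b] unfolding b_def .
    define n0 where "n0 = (LEAST n. W n \<noteq> 0 \<and> multiplicity p (W n) = b)"
    have n0: "W n0 \<noteq> 0" "multiplicity p (W n0) = b"
      using LeastI_ex[OF ex_n] unfolding n0_def by auto
    have n0_less: "\<not> (W n \<noteq> 0 \<and> multiplicity p (W n) = b)" if "n < n0" for n
      using not_less_Least[of n] that unfolding n0_def by blast
    have dvdW: "p ^ b dvd W n" for n
    proof (cases "W n = 0")
      case False then show ?thesis using b_le[of n] power_dvd_iff_le_multiplicity[of "W n" p b] pnu by auto
    qed simp
    have dvdW1: "p ^ (b + 1) dvd W n" if "n < n0" for n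
    proof (cases "W n = 0")
      case False
      then have "b + 1 \<le> multiplicity p (W n)" using b_le[of n] n0_less[OF that] by auto
      then show ?thesis using False power_dvd_iff_le_multiplicity[of "W n" p "b+1"] pnu by auto
    qed simp
    define N where "N = n0 + j0"
    define S where "S = (\<Sum>j\<le>k. (if j \<le> N then A j * W (N - j) else 0))"
    have S_eq: "S = (if N = k - 1 then q k * W (k - 1) else 0)"
    proof (cases "N \<ge> k")
      case True
      have "S = (\<Sum>j\<le>k. q (k - j) * W (N - j))"
        unfolding S_def A_def using True by (intro sum.cong) auto
      also have "\<dots> = (\<Sum>i\<le>k. q i * W (i + (N - k)))"
        by (rule sum.reindex_bij_witness[of _ "\<lambda>i. k - i" "\<lambda>i. k - i"]) (use True in auto)
      also have "\<dots> = 0" by (rule rec)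
      finally show ?thesis using True k1 by auto
    next
      case False
      have "S = (\<Sum>j\<le>k. (if j = 0 \<and> N = k - 1 then q k * W (k - 1) else 0))"
        unfolding S_def
      proof (intro sum.cong refl)
        fix j assume "j \<in> {..k}"
        show "(if j \<le> N then A j * W (N - j) else 0) = (if j = 0 \<and> N = k - 1 then q k * W (k - 1) else 0)"
        proof (cases "j \<le> N")
          case True
          then show ?thesis using False W0[of "N - j"] by (auto simp: A_def)
        qed auto
      qed
      also have "\<dots> = (if N = k - 1 then q k * W (k - 1) else 0)"
        by (simp add: sum.delta)
      finally show ?thesis .
    qed
    have S_split: "S = A j0 * W n0 + (\<Sum>j\<in>{..k} - {j0}. (if j \<le> N then A j * W (N - j) else 0))"
      unfolding S_def using j0(1) by (subst sum.remove[of _ j0]) (auto simp: N_def)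
    have rest_dvd: "p ^ (a + b + 1) dvd (\<Sum>j\<in>{..k} - {j0}. (if j \<le> N then A j * W (N - j) else 0))"
    proof (intro dvd_sum)
      fix j assume j: "j \<in> {..k} - {j0}"
      show "p ^ (a + b + 1) dvd (if j \<le> N then A j * W (N - j) else 0)"
      proof (cases "j < j0")
        case True
        have "p ^ (a + 1) * p ^ b dvd A j * W (N - j)"
          by (intro mult_dvd_mono dvdA1 True dvdW)
        then show ?thesis by (simp add: power_add mult_ac)
      next
        case False
        then have "j > j0" using j by auto
        then have "N - j < n0" if "j \<le> N" using that unfolding N_def by auto
        then have "j \<le> N \<Longrightarrow> p ^ a * p ^ (b + 1) dvd A j * W (N - j)"
          by (intro mult_dvd_mono dvdA dvdW1) auto
        then show ?thesis by (simp add: power_add mult_ac)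
      qed
    qed
    have mAW: "multiplicity p (A j0 * W n0) = a + b"
      using prime_elem_multiplicity_mult_distrib[OF pe j0(2) n0(1)] j0(3) n0(2) by simp
    have AWnz: "A j0 * W n0 \<noteq> 0" using j0(2) n0(1) by simp
    have nd: "\<not> p ^ (a + b + 1) dvd A j0 * W n0"
      using power_dvd_iff_le_multiplicity[OF AWnz pnu, of "a+b+1"] mAW by simp
    have Snd: "\<not> p ^ (a + b + 1) dvd S"
    proof
      assume "p ^ (a + b + 1) dvd S"
      then have "p ^ (a + b + 1) dvd A j0 * W n0"
        using rest_dvd unfolding S_split by (simp add: dvd_add_left_iff)
      with nd show False by simp
    qed
    have Sdvd: "p ^ (a + b) dvd S"
      unfolding S_def
    proof (intro dvd_sum)
      fix j show "p ^ (a + b) dvd (if j \<le> N then A j * W (N - j) else 0)"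
        using mult_dvd_mono[OF dvdA[of j] dvdW[of "N - j"]] by (simp add: power_add)
    qed
    have "S \<noteq> 0" using Snd by auto
    then have SN: "N = k - 1" "S = q k * W (k - 1)" using S_eq by (auto split: if_splits)
    have Snz: "S \<noteq> 0" by fact
    have "multiplicity p S = a + b"
      using power_dvd_iff_le_multiplicity[OF Snz pnu, of "a+b"] power_dvd_iff_le_multiplicity[OF Snz pnu, of "a+b+1"]
        Sdvd Snd by simp
    then have "multiplicity p (q k) + multiplicity p (W (k - 1)) = a + b"
      using prime_elem_multiplicity_mult_distrib[OF pe qk Wk] SN(2) by simp
    moreover have "b \<le> multiplicity p (W (k - 1))" using b_le[OF Wk] .
    ultimately have "multiplicity p (q k) \<le> a" by simp
    also have "a \<le> multiplicity p (q i)"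
      using a_le[of "k - i"] ik qi by (simp add: A_def)
    finally show "multiplicity p (q k) \<le> multiplicity p (q i)" .
  qed
qed


fun gs :: "(nat \<Rightarrow> 'a \<Rightarrow> 'b::real_inner) \<Rightarrow> nat \<Rightarrow> nat \<Rightarrow> 'a \<Rightarrow> 'b" where
  "gs R j 0 = R j"
| "gs R j (Suc i) = (\<lambda>x. (gs R i i x \<bullet> gs R i i x) *\<^sub>R gs R j i x - (gs R j i x \<bullet> gs R i i x) *\<^sub>R gs R i i x)"

definition gse :: "(nat \<Rightarrow> 'a \<Rightarrow> 'b::real_inner) \<Rightarrow> nat \<Rightarrow> 'a \<Rightarrow> 'b" where
  "gse R i = gs R i i"

definition gD :: "(nat \<Rightarrow> 'a \<Rightarrow> 'b::real_inner) \<Rightarrow> nat \<Rightarrow> 'a \<Rightarrow> real" where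
  "gD R i x = (\<Prod>l<i. gse R l x \<bullet> gse R l x)"

lemma gs_pfv: assumes "\<forall>i. polyfun_vec (R i)" shows "polyfun_vec (gs R j i)"
  using assms
proof (induction i arbitrary: j)
  case 0 then show ?case by simp
next
  case (Suc i)
  have a: "polyfun_vec (gs R j i)" "polyfun_vec (gs R i i)" using Suc by auto
  show ?case unfolding gs.simps
    by (intro pfv_diff pfv_scale pf_inner a)
qed

lemma gse_pfv: "\<forall>i. polyfun_vec (R i) \<Longrightarrow> polyfun_vec (gse R i)"
  unfolding gse_def by (rule gs_pfv)

lemma gD_pf: "\<forall>i. polyfun_vec (R i) \<Longrightarrow> polyfun (gD R i)"
  unfolding gD_def[abs_def] by (intro pf_prod pf_inner gse_pfv)

lemma gD_Suc: "gD R (Suc i) x = gD R i x * (gse R i x \<bullet> gse R i x)"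
  by (simp add: gD_def)

lemma gD_nz: "gD R i x \<noteq> 0 \<longleftrightarrow> (\<forall>l<i. gse R l x \<noteq> 0)"
  by (auto simp: gD_def)

lemma gs_orth: "l < i \<Longrightarrow> gs R j i x \<bullet> gse R l x = 0"
proof (induction i arbitrary: j l)
  case 0 then show ?case by simp
next
  case (Suc i)
  have e: "gse R i = gs R i i" by (simp add: gse_def)
  show ?case
  proof (cases "l = i")
    case True
    then show ?thesis by (simp add: inner_diff_left e inner_commute[of "gs R i i x" "gs R j i x"])
  next
    case False
    then have "l < i" using Suc.prems by simp
    then have "gs R j i x \<bullet> gse R l x = 0" "gs R i i x \<bullet> gse R l x = 0" using Suc.IH by auto
    then show ?thesis by (simp add: inner_diff_left)
  qed
qed

lemma gse_orth: "l < i \<Longrightarrow> gse R i x \<bullet> gse R l x = 0"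
  unfolding gse_def[of R i] by (rule gs_orth)

lemma gs_aux: "(N::real) *\<^sub>R (D *\<^sub>R a + s1) - c *\<^sub>R (D *\<^sub>R b + s2)
   = (D * N) *\<^sub>R a + ((N *\<^sub>R s1 - c *\<^sub>R s2) + (- (c * D)) *\<^sub>R (b::'b::real_vector))"
  by (simp add: algebra_simps)

lemma gs_comb:
  assumes "\<forall>i. polyfun_vec (R i)"
  shows "\<exists>g. (\<forall>l. polyfun (g l)) \<and> (\<forall>x. gs R j i x = gD R i x *\<^sub>R R j x + (\<Sum>l<i. g l x *\<^sub>R R l x))"
proof (induction i arbitrary: j)
  case 0 then show ?case by (auto simp: gD_def intro!: exI[of _ "\<lambda>l x. 0"] pf_const)
next
  case (Suc i)
  obtain g1 where g1: "\<forall>l. polyfun (g1 l)" "\<forall>x. gs R j i x = gD R i x *\<^sub>R R j x + (\<Sum>l<i. g1 l x *\<^sub>R R l x)"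
    using Suc.IH[of j] by blast
  obtain g2 where g2: "\<forall>l. polyfun (g2 l)" "\<forall>x. gs R i i x = gD R i x *\<^sub>R R i x + (\<Sum>l<i. g2 l x *\<^sub>R R l x)"
    using Suc.IH[of i] by blast
  define N where "N x = gs R i i x \<bullet> gs R i i x" for x
  define c where "c x = gs R j i x \<bullet> gs R i i x" for x
  have pN: "polyfun N" unfolding N_def[abs_def] by (intro pf_inner gs_pfv assms)
  have pc: "polyfun c" unfolding c_def[abs_def] by (intro pf_inner gs_pfv assms)
  have pD: "polyfun (gD R i)" by (rule gD_pf[OF assms])
  define g where "g l x = (if l < i then N x * g1 l x - c x * g2 l x else - (c x * gD R i x))" for l x
  have pg: "polyfun (g l)" for l
    unfolding g_def[abs_def]
    by (cases "l < i") (simp_all add: pf_diff pf_mult pf_uminus pN pc pD g1(1) g2(1))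
  have "gs R j (Suc i) x = gD R (Suc i) x *\<^sub>R R j x + (\<Sum>l<Suc i. g l x *\<^sub>R R l x)" for x
  proof -
  have sum_eq: "N x *\<^sub>R (\<Sum>l<i. g1 l x *\<^sub>R R l x) - c x *\<^sub>R (\<Sum>l<i. g2 l x *\<^sub>R R l x) = (\<Sum>l<i. g l x *\<^sub>R R l x)"
  proof -
    have "(\<Sum>l<i. g l x *\<^sub>R R l x) = (\<Sum>l<i. (N x * g1 l x - c x * g2 l x) *\<^sub>R R l x)"
      by (rule sum.cong) (auto simp: g_def)
    also have "\<dots> = N x *\<^sub>R (\<Sum>l<i. g1 l x *\<^sub>R R l x) - c x *\<^sub>R (\<Sum>l<i. g2 l x *\<^sub>R R l x)"
      by (simp add: scaleR_sum_right sum_subtractf scaleR_diff_left)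
    finally show ?thesis by simp
  qed
    have "gs R j (Suc i) x = N x *\<^sub>R gs R j i x - c x *\<^sub>R gs R i i x"
      by (simp add: N_def c_def)
    also have "\<dots> = N x *\<^sub>R (gD R i x *\<^sub>R R j x + (\<Sum>l<i. g1 l x *\<^sub>R R l x))
        - c x *\<^sub>R (gD R i x *\<^sub>R R i x + (\<Sum>l<i. g2 l x *\<^sub>R R l x))"
      using g1(2) g2(2) by simp
    also have "\<dots> = (gD R i x * N x) *\<^sub>R R j x + ((N x *\<^sub>R (\<Sum>l<i. g1 l x *\<^sub>R R l x) - c x *\<^sub>R (\<Sum>l<i. g2 l x *\<^sub>R R l x)) + (- (c x * gD R i x)) *\<^sub>R R i x)"
      by (rule gs_aux)
    also have "\<dots> = (gD R i x * N x) *\<^sub>R R j x + ((\<Sum>l<i. g l x *\<^sub>R R l x) + g i x *\<^sub>R R i x)"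
      unfolding sum_eq by (simp add: g_def)
    also have "\<dots> = gD R (Suc i) x *\<^sub>R R j x + (\<Sum>l<Suc i. g l x *\<^sub>R R l x)"
      by (simp add: gD_Suc gse_def N_def)
    finally show ?thesis .
  qed
  then show ?case using pg by blast
qed

lemma gse_comb:
  assumes "\<forall>i. polyfun_vec (R i)"
  shows "\<exists>g. (\<forall>l. polyfun (g l)) \<and> (\<forall>x. gse R i x = gD R i x *\<^sub>R R i x + (\<Sum>l<i. g l x *\<^sub>R R l x))"
  unfolding gse_def using gs_comb[OF assms] .

lemma gD_mono_nz: "gD R i x \<noteq> 0 \<Longrightarrow> l \<le> i \<Longrightarrow> gD R l x \<noteq> 0"
  by (auto simp: gD_nz)

lemma perp:
  assumes R: "\<forall>i. polyfun_vec (R i)" and w: "\<forall>l<i. w \<bullet> gse R l x = 0" and D: "gD R i x \<noteq> 0"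
  shows "l < i \<Longrightarrow> w \<bullet> R l x = 0"
proof (induction l rule: less_induct)
  case (less l)
  obtain g where g: "\<forall>x. gse R l x = gD R l x *\<^sub>R R l x + (\<Sum>m<l. g m x *\<^sub>R R m x)"
    using gse_comb[OF R, of l] by blast
  have "0 = w \<bullet> gse R l x" using w less.prems by simp
  also have "\<dots> = gD R l x * (w \<bullet> R l x) + (\<Sum>m<l. g m x * (w \<bullet> R m x))"
    by (simp add: g inner_add_right inner_sum_right)
  also have "(\<Sum>m<l. g m x * (w \<bullet> R m x)) = 0"
    using less.IH less.prems by (intro sum.neutral) auto
  finally have "gD R l x * (w \<bullet> R l x) = 0" by simp
  moreover have "gD R l x \<noteq> 0" using gD_mono_nz[OF D] less.prems by simp
  ultimately show ?case by simp
qed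

lemma gse_perp_R:
  assumes R: "\<forall>i. polyfun_vec (R i)" and D: "gD R n x \<noteq> 0" and l: "l < n"
  shows "gse R n x \<bullet> R l x = 0"
proof (rule perp[OF R _ D l])
  show "\<forall>l<n. gse R n x \<bullet> gse R l x = 0" using gse_orth[of _ n R x] by blast
qed

lemma gse_R_nz:
  assumes R: "\<forall>i. polyfun_vec (R i)" and D: "gD R (Suc n) x \<noteq> 0"
  shows "gse R n x \<bullet> R n x \<noteq> 0"
proof -
  have Dn: "gD R n x \<noteq> 0" and en: "gse R n x \<noteq> 0" using D by (auto simp: gD_nz)
  obtain g where g: "\<forall>x. gse R n x = gD R n x *\<^sub>R R n x + (\<Sum>m<n. g m x *\<^sub>R R m x)"
    using gse_comb[OF R, of n] by blast
  have "gse R n x \<bullet> gse R n x = gse R n x \<bullet> (gD R n x *\<^sub>R R n x + (\<Sum>m<n. g m x *\<^sub>R R m x))"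
    using g by metis
  also have "\<dots> = gD R n x * (gse R n x \<bullet> R n x) + (\<Sum>m<n. g m x * (gse R n x \<bullet> R m x))"
    by (simp only: inner_add_right inner_sum_right inner_scaleR_right)
  also have "(\<Sum>m<n. g m x * (gse R n x \<bullet> R m x)) = 0"
    using gse_perp_R[OF R Dn] by (intro sum.neutral) auto
  finally show ?thesis using en by auto
qed

lemma indep_at:
  assumes R: "\<forall>i. polyfun_vec (R i)" and D: "gD R n x \<noteq> 0"
  shows "(\<Sum>i<n. c i *\<^sub>R R i x) = 0 \<Longrightarrow> i < n \<Longrightarrow> c i = 0"
  using D
proof (induction n arbitrary: i)
  case 0 then show ?case by simp
next
  case (Suc n)
  have Dn: "gD R n x \<noteq> 0" using Suc.prems(3) by (auto simp: gD_nz)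
  have "0 = gse R n x \<bullet> (\<Sum>i<Suc n. c i *\<^sub>R R i x)" using Suc.prems(1) by simp
  also have "\<dots> = c n * (gse R n x \<bullet> R n x) + (\<Sum>i<n. c i * (gse R n x \<bullet> R i x))"
    by (simp add: inner_sum_right inner_add_right)
  also have "(\<Sum>i<n. c i * (gse R n x \<bullet> R i x)) = 0"
    using gse_perp_R[OF R Dn] by (intro sum.neutral) auto
  finally have cn: "c n = 0" using gse_R_nz[OF R Suc.prems(3)] by simp
  then have "(\<Sum>i<n. c i *\<^sub>R R i x) = 0" using Suc.prems(1) by simp
  then show ?case using Suc.IH[OF _ _ Dn] cn Suc.prems(2) by (cases "i = n") auto
qed

lemma gD_at_x0:
  assumes R: "\<forall>i. polyfun_vec (R i)" and x0: "x0 \<notin> A_set R (k - 1)" and k: "k \<ge> 1"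
  shows "i \<le> k \<Longrightarrow> gD R i x0 \<noteq> 0"
proof (induction i)
  case 0 then show ?case by (simp add: gD_def)
next
  case (Suc i)
  then have Di: "gD R i x0 \<noteq> 0" by simp
  obtain g where g: "\<forall>x. gse R i x = gD R i x *\<^sub>R R i x + (\<Sum>m<i. g m x *\<^sub>R R m x)"
    using gse_comb[OF R, of i] by blast
  have "gse R i x0 \<noteq> 0"
  proof
    assume e0: "gse R i x0 = 0"
    define c where "c l = (if l < i then g l x0 else if l = i then gD R i x0 else 0)" for l
    have "(\<Sum>l\<le>k - 1. c l *\<^sub>R R l x0) = (\<Sum>l<Suc i. c l *\<^sub>R R l x0)"
      using Suc.prems by (intro sum.mono_neutral_right) (auto simp: c_def)
    also have "\<dots> = gse R i x0" by (simp add: g c_def add.commute)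
    finally have "(\<Sum>l\<le>k - 1. c l *\<^sub>R R l x0) = 0" using e0 by simp
    moreover have "i \<le> k - 1" "c i \<noteq> 0" using Suc.prems Di by (auto simp: c_def)
    ultimately have "x0 \<in> A_set R (k - 1)" unfolding A_set_def by blast
    with x0 show False by simp
  qed
  then show ?case using Di by (simp add: gD_Suc)
qed


lemma Eval_fin:
  assumes "\<forall>i\<ge>N. c i = (\<lambda>_. 0)"
  shows "Eval R c = (\<lambda>x. \<Sum>i<N. c i x *\<^sub>R R i x)"
proof
  fix x
  have sub: "{i. c i \<noteq> (\<lambda>_. 0)} \<subseteq> {..<N}" using assms by (metis (mono_tags, lifting) lessThan_iff mem_Collect_eq not_le subsetI)
  show "Eval R c x = (\<Sum>i<N. c i x *\<^sub>R R i x)"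
    unfolding Eval_def
    by (rule sum.mono_neutral_left) (use sub in auto)
qed

lemma A_set_DIM: "A_set R DIM('b) = (UNIV :: 'a set)" for R :: "nat \<Rightarrow> 'a \<Rightarrow> 'b::euclidean_space"
proof (intro set_eqI iffI)
  fix x :: 'a
  show "x \<in> A_set R DIM('b)"
  proof (cases "inj_on (\<lambda>i. R i x) {..DIM('b)}")
    case False
    then obtain i j where ij: "i \<le> DIM('b)" "j \<le> DIM('b)" "i \<noteq> j" "R i x = R j x"
      unfolding inj_on_def by auto
    define c where "c l = (if l = i then 1 else if l = j then -1 else (0::real))" for l
    have "(\<Sum>l\<le>DIM('b). c l *\<^sub>R R l x) = (\<Sum>l\<le>DIM('b). (if l = i then R l x else 0) + (if l = j then - R l x else 0))"
      by (rule sum.cong) (auto simp: c_def ij(3))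
    also have "\<dots> = R i x - R j x" using ij by (simp add: sum.distrib sum.delta)
    also have "\<dots> = 0" using ij by simp
    finally show ?thesis unfolding A_set_def using ij by (auto simp: c_def intro!: exI[of _ c])
  next
    case True
    define S where "S = (\<lambda>i. R i x) ` {..DIM('b)}"
    have "card S = Suc DIM('b)" unfolding S_def using card_image[OF True] by simp
    then have "dependent S" by (intro dependent_biggerset) simp
    then obtain T u where T: "finite T" "T \<subseteq> S" "(\<Sum>v\<in>T. u v *\<^sub>R v) = 0" "\<exists>v\<in>T. u v \<noteq> 0"
      unfolding real_vector.dependent_explicit by blast
    define c where "c i = (if R i x \<in> T then u (R i x) else 0)" for i
    have "(\<Sum>i\<le>DIM('b). c i *\<^sub>R R i x) = (\<Sum>v\<in>S. (if v \<in> T then u v else 0) *\<^sub>R v)"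
      unfolding S_def c_def by (subst sum.reindex[OF True]) simp
    also have "\<dots> = (\<Sum>v\<in>T. u v *\<^sub>R v)"
    proof -
      have fS: "finite S" unfolding S_def by simp
      have "(\<Sum>v\<in>S. (if v \<in> T then u v else 0) *\<^sub>R v) = (\<Sum>v\<in>S. if v \<in> T then u v *\<^sub>R v else 0)"
        by (rule sum.cong) auto
      also have "\<dots> = (\<Sum>v\<in>S \<inter> T. u v *\<^sub>R v)" using fS by (simp add: sum.inter_restrict)
      also have "S \<inter> T = T" using T(2) by auto
      finally show ?thesis .
    qed
    also have "\<dots> = 0" by (rule T(3))
    finally have s0: "(\<Sum>i\<le>DIM('b). c i *\<^sub>R R i x) = 0" .
    obtain v where v: "v \<in> T" "u v \<noteq> 0" using T(4) by blast
    then obtain i where i: "i \<le> DIM('b)" "v = R i x" using T(2) unfolding S_def by auto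
    have "c i \<noteq> 0" using v i by (simp add: c_def)
    then show ?thesis unfolding A_set_def using s0 i by blast
  qed
qed simp

lemma kmin_ex: "\<exists>k. A_set R k = (UNIV :: 'a set)" for R :: "nat \<Rightarrow> 'a \<Rightarrow> 'b::euclidean_space"
  by (rule exI[of _ "DIM('b)"]) (rule A_set_DIM)

lemma kmin_A: "A_set R (kmin R) = (UNIV :: 'a set)" for R :: "nat \<Rightarrow> 'a \<Rightarrow> 'b::euclidean_space"
  unfolding kmin_def using LeastI_ex[OF kmin_ex] .

lemma kmin_notA: "kmin R \<ge> 1 \<Longrightarrow> A_set R (kmin R - 1) \<noteq> (UNIV :: 'a set)"
  for R :: "nat \<Rightarrow> 'a \<Rightarrow> 'b::euclidean_space"
proof -
  assume k1: "kmin R \<ge> 1"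
  have lt: "kmin R - 1 < kmin R" using k1 by simp
  from lt have "(LEAST k. A_set R k = (UNIV::'a set)) - 1 < (LEAST k. A_set R k = (UNIV::'a set))"
    by (simp add: kmin_def)
  then have "\<not> A_set R ((LEAST k. A_set R k = (UNIV::'a set)) - 1) = (UNIV::'a set)"
    by (rule not_less_Least)
  then show ?thesis by (simp add: kmin_def)
qed

lemma ek_zero:
  assumes R: "\<forall>i. polyfun_vec (R i)" and A: "A_set R k = UNIV" and D0: "gD R k x0 \<noteq> 0"
  shows "gse R k = (\<lambda>_. 0)"
proof -
  obtain g where g: "\<forall>l. polyfun (g l)" "\<forall>x. gse R k x = gD R k x *\<^sub>R R k x + (\<Sum>l<k. g l x *\<^sub>R R l x)"
    using gse_comb[OF R, of k] by blast
  have pt: "gse R k x = 0" if D: "gD R k x \<noteq> 0" for x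
  proof -
    have "x \<in> A_set R k" using A by simp
    then obtain c i where c: "i \<le> k" "c i \<noteq> 0" "(\<Sum>i\<le>k. c i *\<^sub>R R i x) = 0"
      unfolding A_set_def by blast
    have split: "(\<Sum>i\<le>k. c i *\<^sub>R R i x) = (\<Sum>i<k. c i *\<^sub>R R i x) + c k *\<^sub>R R k x"
      by (simp add: lessThan_Suc_atMost[symmetric])
    have ck: "c k \<noteq> 0"
    proof
      assume "c k = 0"
      then have "(\<Sum>i<k. c i *\<^sub>R R i x) = 0" using c(3) split by simp
      then have "\<forall>i<k. c i = 0" using indep_at[OF R D] by blast
      with c(1,2) \<open>c k = 0\<close> show False by (cases "i = k") auto
    qed
    have "c k * (gse R k x \<bullet> R k x) = gse R k x \<bullet> (\<Sum>i\<le>k. c i *\<^sub>R R i x) - (\<Sum>i<k. c i * (gse R k x \<bullet> R i x))"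
      by (simp add: split inner_add_right inner_sum_right)
    also have "(\<Sum>i<k. c i * (gse R k x \<bullet> R i x)) = 0"
      using gse_perp_R[OF R D] by (intro sum.neutral) auto
    finally have "gse R k x \<bullet> R k x = 0" using c(3) ck by simp
    have "gse R k x \<bullet> gse R k x = gse R k x \<bullet> (gD R k x *\<^sub>R R k x + (\<Sum>l<k. g l x *\<^sub>R R l x))"
      using g(2) by metis
    also have "\<dots> = gD R k x * (gse R k x \<bullet> R k x) + (\<Sum>l<k. g l x * (gse R k x \<bullet> R l x))"
      by (simp only: inner_add_right inner_sum_right inner_scaleR_right)
    also have "(\<Sum>l<k. g l x * (gse R k x \<bullet> R l x)) = 0"
      using gse_perp_R[OF R D] by (intro sum.neutral) auto
    finally show ?thesis using \<open>gse R k x \<bullet> R k x = 0\<close> by simp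
  qed
  have "gD R k x *\<^sub>R gse R k x = 0" for x using pt[of x] by (cases "gD R k x = 0") auto
  then show ?thesis using pfv_domain[OF gD_pf[OF R] gse_pfv[OF R] _ D0] by blast
qed

lemma perp_global:
  assumes R: "\<forall>i. polyfun_vec (R i)" and D0: "gD R n x0 \<noteq> 0" and i: "i < n"
  shows "gse R n x \<bullet> R i x = 0"
proof -
  have "gD R n y * (gse R n y \<bullet> R i y) = 0" for y
    using gse_perp_R[OF R _ i, of y] by (cases "gD R n y = 0") auto
  moreover have pI: "polyfun (\<lambda>y. gse R n y \<bullet> R i y)"
    by (rule pf_inner[OF gse_pfv[OF R]]) (use R in simp)
  ultimately show ?thesis using pf_domain[OF gD_pf[OF R] pI _ D0] by simp
qed

lemma kern_zero:
  assumes R: "\<forall>i. polyfun_vec (R i)" and D0: "gD R k x0 \<noteq> 0"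
  shows "n \<le> k \<Longrightarrow> (\<forall>i. polyfun (c i)) \<Longrightarrow> (\<forall>x. (\<Sum>i<n. c i x *\<^sub>R R i x) = 0) \<Longrightarrow> i < n \<Longrightarrow> c i = (\<lambda>_. 0)"
proof (induction n arbitrary: i)
  case 0 then show ?case by simp
next
  case (Suc n)
  have Dn: "gD R n x0 \<noteq> 0" using D0 Suc.prems(1) gD_mono_nz by (metis Suc_leD)
  have DSn: "gD R (Suc n) x0 \<noteq> 0" using D0 Suc.prems(1) gD_mono_nz by metis
  have "c n y * (gse R n y \<bullet> R n y) = 0" for y
  proof -
    have "0 = gse R n y \<bullet> (\<Sum>i<Suc n. c i y *\<^sub>R R i y)" using Suc.prems(3) by simp
    also have "\<dots> = c n y * (gse R n y \<bullet> R n y) + (\<Sum>i<n. c i y * (gse R n y \<bullet> R i y))"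
      by (simp add: inner_sum_right inner_add_right)
    also have "(\<Sum>i<n. c i y * (gse R n y \<bullet> R i y)) = 0"
      using perp_global[OF R Dn] by (intro sum.neutral) auto
    finally show ?thesis by simp
  qed
  then have "\<forall>y. (gse R n y \<bullet> R n y) * c n y = 0" by (simp add: mult.commute)
  moreover have pT: "polyfun (\<lambda>y. gse R n y \<bullet> R n y)"
    by (rule pf_inner[OF gse_pfv[OF R]]) (use R in simp)
  moreover have "polyfun (c n)" using Suc.prems(2) by simp
  ultimately have "c n y = 0" for y
    using pf_domain[of "\<lambda>y. gse R n y \<bullet> R n y" "c n" x0 y] gse_R_nz[OF R DSn] by simp
  then have cn: "c n = (\<lambda>_. 0)" by (simp add: fun_eq_iff)
  then have "\<forall>x. (\<Sum>i<n. c i x *\<^sub>R R i x) = 0" using Suc.prems(3) by simp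
  then show ?case using Suc.IH[of i] Suc.prems cn by (cases "i = n") auto
qed


inductive pd :: "nat \<Rightarrow> ('a::euclidean_space \<Rightarrow> real) \<Rightarrow> bool" where
  pd_const: "pd n (\<lambda>x. c)"
| pd_lin: "1 \<le> n \<Longrightarrow> pd n (\<lambda>x. x \<bullet> b)"
| pd_add: "pd n f \<Longrightarrow> pd n g \<Longrightarrow> pd n (\<lambda>x. f x + g x)"
| pd_mult: "pd a f \<Longrightarrow> pd b g \<Longrightarrow> pd (a + b) (\<lambda>x. f x * g x)"

lemma pd_mono: "pd n f \<Longrightarrow> n \<le> m \<Longrightarrow> pd m f"
proof (induction arbitrary: m rule: pd.induct)
  case (pd_const n c) show ?case by (rule pd.pd_const)
next
  case (pd_lin n b) then show ?case by (intro pd.pd_lin) simp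
next
  case (pd_add n f g) then show ?case by (intro pd.pd_add) auto
next
  case (pd_mult a f b g)
  have "pd (m - b) f" using pd_mult by simp
  from pd.pd_mult[OF this pd_mult.hyps(2)] show ?case using pd_mult.prems by simp
qed

lemma pd_polyfun: "pd n f \<Longrightarrow> polyfun f"
  by (induction rule: pd.induct) (auto intro: polyfun.intros)

lemma polyfun_pd: "polyfun f \<Longrightarrow> \<exists>n. pd n f"
proof (induction rule: polyfun.induct)
  case (const c) then show ?case by (blast intro: pd_const)
next
  case (lin b) then show ?case by (blast intro: pd_lin[of 1])
next
  case (add f g)
  then obtain a b where "pd a f" "pd b g" by blast
  then have "pd (max a b) f" "pd (max a b) g" by (auto elim: pd_mono)
  then show ?case by (blast intro: pd_add)
next
  case (mult f g)
  then obtain a b where "pd a f" "pd b g" by blast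
  then show ?case by (blast intro: pd_mult)
qed

lemma pd0_const: "pd n f \<Longrightarrow> n = 0 \<Longrightarrow> f x = f y"
  by (induction rule: pd.induct) auto

lemma pd_sum: "(\<And>i. i \<in> S \<Longrightarrow> pd n (f i)) \<Longrightarrow> pd n (\<lambda>x. \<Sum>i\<in>S. f i x)"
proof (induction S rule: infinite_finite_induct)
  case (infinite A) then show ?case by (simp add: pd_const)
next
  case empty then show ?case by (simp add: pd_const)
next
  case (insert a A) then show ?case by (simp add: pd_add)
qed

lemma pd_expand:
  assumes "pd n f"
  shows "\<exists>P. (\<forall>y v t. f (y + t *\<^sub>R v) = poly (P y v) t) \<and> (\<forall>y v. degree (P y v) \<le> n)
     \<and> (\<forall>j v. pd (n - j) (\<lambda>y. coeff (P y v) j)) \<and> (\<forall>j y. pd j (\<lambda>v. coeff (P y v) j))"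
  using assms
proof (induction rule: pd.induct)
  case (pd_const n c)
  show ?case by (intro exI[of _ "\<lambda>y v. [:c:]"]) (simp add: pd.pd_const)
next
  case (pd_lin n b)
  define P where "P y v = [:y \<bullet> b, v \<bullet> b:]" for y v :: 'a
  have 1: "f (y + t *\<^sub>R v) = poly (P y v) t" if "f = (\<lambda>x. x \<bullet> b)" for f y v t
    using that by (simp add: P_def inner_add_left algebra_simps)
  have 2: "degree (P y v) \<le> n" for y v using pd_lin by (simp add: P_def)
  have 3: "pd (n - j) (\<lambda>y. coeff (P y v) j)" for j v
  proof (cases j)
    case 0 then show ?thesis using pd_lin by (simp add: P_def pd.pd_lin)
  next
    case (Suc j') then show ?thesis by (cases j') (simp_all add: P_def pd.pd_const)
  qed
  have 4: "pd j (\<lambda>v. coeff (P y v) j)" for j y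
  proof (cases j)
    case 0 then show ?thesis by (simp add: P_def pd.pd_const)
  next
    case (Suc j') then show ?thesis by (cases j') (simp_all add: P_def pd.pd_const pd.pd_lin)
  qed
  show ?case using 1[OF refl] 2 3 4 by blast
next
  case (pd_add n f g)
  then obtain P Q where P: "\<forall>y v t. f (y + t *\<^sub>R v) = poly (P y v) t" "\<forall>y v. degree (P y v) \<le> n"
     "\<forall>j v. pd (n - j) (\<lambda>y. coeff (P y v) j)" "\<forall>j y. pd j (\<lambda>v. coeff (P y v) j)"
    and Q: "\<forall>y v t. g (y + t *\<^sub>R v) = poly (Q y v) t" "\<forall>y v. degree (Q y v) \<le> n"
     "\<forall>j v. pd (n - j) (\<lambda>y. coeff (Q y v) j)" "\<forall>j y. pd j (\<lambda>v. coeff (Q y v) j)"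
    by blast
  show ?case
    by (intro exI[of _ "\<lambda>y v. P y v + Q y v"])
      (simp add: P Q degree_add_le pd.pd_add)
next
  case (pd_mult a f b g)
  then obtain P Q where P: "\<forall>y v t. f (y + t *\<^sub>R v) = poly (P y v) t" "\<forall>y v. degree (P y v) \<le> a"
     "\<forall>j v. pd (a - j) (\<lambda>y. coeff (P y v) j)" "\<forall>j y. pd j (\<lambda>v. coeff (P y v) j)"
    and Q: "\<forall>y v t. g (y + t *\<^sub>R v) = poly (Q y v) t" "\<forall>y v. degree (Q y v) \<le> b"
     "\<forall>j v. pd (b - j) (\<lambda>y. coeff (Q y v) j)" "\<forall>j y. pd j (\<lambda>v. coeff (Q y v) j)"
    by blast
  have 1: "\<forall>y v t. f (y + t *\<^sub>R v) * g (y + t *\<^sub>R v) = poly (P y v * Q y v) t" using P Q by simp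
  have 2: "\<forall>y v. degree (P y v * Q y v) \<le> a + b"
    using P(2) Q(2) by (meson add_mono degree_mult_le order_trans)
  have 3: "pd (a + b - j) (\<lambda>y. coeff (P y v * Q y v) j)" for j v
    unfolding coeff_mult
  proof (rule pd_sum)
    fix i assume i: "i \<in> {..j}"
    show "pd (a + b - j) (\<lambda>y. coeff (P y v) i * coeff (Q y v) (j - i))"
    proof (cases "i \<le> a \<and> j - i \<le> b")
      case True
      have "pd (a - i + (b - (j - i))) (\<lambda>y. coeff (P y v) i * coeff (Q y v) (j - i))"
        using P(3) Q(3) by (intro pd.pd_mult) auto
      moreover have "a - i + (b - (j - i)) = a + b - j" using True i by auto
      ultimately show ?thesis by simp
    next
      case False
      have "coeff (P y v) i * coeff (Q y v) (j - i) = 0" for y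
      proof (cases "i \<le> a")
        case True
        then have "\<not> j - i \<le> b" using False by simp
        then have "degree (Q y v) < j - i" using Q(2)[rule_format, of y v] by linarith
        then show ?thesis by (simp add: coeff_eq_0)
      next
        case False
        then have "degree (P y v) < i" using P(2)[rule_format, of y v] by linarith
        then show ?thesis by (simp add: coeff_eq_0)
      qed
      then have "(\<lambda>y. coeff (P y v) i * coeff (Q y v) (j - i)) = (\<lambda>y. 0)" by (simp add: fun_eq_iff)
      then show ?thesis by (simp add: pd.pd_const)
    qed
  qed
  have 4: "pd j (\<lambda>v. coeff (P y v * Q y v) j)" for j y
    unfolding coeff_mult
  proof (rule pd_sum)
    fix i assume i: "i \<in> {..j}"
    have "pd (i + (j - i)) (\<lambda>v. coeff (P y v) i * coeff (Q y v) (j - i))"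
      using P(4) Q(4) by (intro pd.pd_mult) auto
    then show "pd j (\<lambda>v. coeff (P y v) i * coeff (Q y v) (j - i))" using i by simp
  qed
  show ?case
    by (rule exI[of _ "\<lambda>y v. P y v * Q y v"]) (use 1 2 3 4 in blast)
qed

lemma poly_one_sum: "degree (p::real poly) \<le> n \<Longrightarrow> poly p 1 = (\<Sum>j\<le>n. coeff p j)"
proof -
  assume d: "degree p \<le> n"
  have "poly p 1 = (\<Sum>j\<le>degree p. coeff p j)" using poly_altdef[of p 1] by simp
  also have "\<dots> = (\<Sum>j\<le>n. coeff p j)"
    using d by (intro sum.mono_neutral_left) (auto simp: coeff_eq_0)
  finally show ?thesis .
qed

lemma good_direction:
  assumes pf: "polyfun f" and nz: "f \<noteq> (\<lambda>_. 0)"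
  shows "\<exists>v n h P. h \<noteq> 0 \<and> (\<forall>y t. f (y + t *\<^sub>R v) = poly (P y) t) \<and> (\<forall>y. degree (P y) = n \<and> coeff (P y) n = h)
     \<and> (\<forall>j. polyfun (\<lambda>y. coeff (P y) j))"
proof -
  have ex: "\<exists>n. pd n f" using polyfun_pd[OF pf] .
  define n where "n = (LEAST n. pd n f)"
  have pdn: "pd n f" unfolding n_def using LeastI_ex[OF ex] .
  obtain P where P: "\<forall>y v t. f (y + t *\<^sub>R v) = poly (P y v) t" "\<forall>y v. degree (P y v) \<le> n"
     "\<forall>j v. pd (n - j) (\<lambda>y. coeff (P y v) j)" "\<forall>j y. pd j (\<lambda>v. coeff (P y v) j)"
    using pd_expand[OF pdn] by blast
  show ?thesis
  proof (cases "\<exists>v. coeff (P 0 v) n \<noteq> 0")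
    case True
    then obtain v where v: "coeff (P 0 v) n \<noteq> 0" by blast
    define h where "h = coeff (P 0 v) n"
    have ch: "coeff (P y v) n = h" for y
      unfolding h_def using pd0_const[OF P(3)[rule_format, of n v]] by simp
    have dg: "degree (P y v) = n" for y
    proof -
      have "coeff (P y v) n = h" by (rule ch)
      then have "coeff (P y v) n \<noteq> 0" using v unfolding h_def by simp
      then have "n \<le> degree (P y v)" by (rule le_degree)
      then show ?thesis using P(2)[rule_format, of y v] by simp
    qed
    have hnz: "h \<noteq> 0" using v h_def by simp
    have pfc: "\<forall>j. polyfun (\<lambda>y. coeff (P y v) j)" using P(3) pd_polyfun by blast
    show ?thesis
      by (rule exI[of _ v], rule exI[of _ n], rule exI[of _ h], rule exI[of _ "\<lambda>y. P y v"])
        (use hnz P(1) ch dg pfc in auto)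
  next
    case False
    then have top0: "coeff (P 0 v) n = 0" for v by blast
    have fv: "f v = (\<Sum>j<n. coeff (P 0 v) j)" for v
    proof -
      have "f v = f (0 + 1 *\<^sub>R v)" by simp
      also have "\<dots> = poly (P 0 v) 1" using P(1) by blast
      also have "\<dots> = (\<Sum>j\<le>n. coeff (P 0 v) j)" using poly_one_sum P(2) by blast
      also have "\<dots> = (\<Sum>j<n. coeff (P 0 v) j)" using top0[of v] by (simp add: lessThan_Suc_atMost[symmetric])
      finally show ?thesis .
    qed
    show ?thesis
    proof (cases "n = 0")
      case True
      then have "f = (\<lambda>_. 0)" using fv by (simp add: fun_eq_iff)
      with nz show ?thesis by simp
    next
      case False
      have "pd (n - 1) (\<lambda>v. \<Sum>j<n. coeff (P 0 v) j)"
      proof (rule pd_sum)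
        fix j assume "j \<in> {..<n}"
        then have "j \<le> n - 1" by auto
        then show "pd (n - 1) (\<lambda>v. coeff (P 0 v) j)" by (rule pd_mono[OF P(4)[rule_format]])
      qed
      moreover have "f = (\<lambda>v. \<Sum>j<n. coeff (P 0 v) j)" using fv by (simp add: fun_eq_iff)
      ultimately have "pd (n - 1) f" by simp
      moreover have "n - 1 < n" using False by simp
      ultimately show ?thesis using not_less_Least[of "n - 1" "\<lambda>n. pd n f"] unfolding n_def by blast
    qed
  qed
qed

lemma pf_div_const: "polyfun f \<Longrightarrow> polyfun (\<lambda>x. f x / c)"
  using pf_mult[OF _ pf_const[of "inverse c"], of f] by (simp add: divide_inverse)

lemma divmod_red:
  fixes A A' B :: "'a::euclidean_space \<Rightarrow> real poly"
  assumes Bnz: "\<forall>y. B y \<noteq> 0" and eq: "\<forall>y. A y = A' y + monom (c y) d * B y" and pc: "polyfun c"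
    and IH: "(\<forall>j. polyfun (\<lambda>y. coeff (A' y div B y) j)) \<and> (\<forall>j. polyfun (\<lambda>y. coeff (A' y mod B y) j))"
  shows "(\<forall>j. polyfun (\<lambda>y. coeff (A y div B y) j)) \<and> (\<forall>j. polyfun (\<lambda>y. coeff (A y mod B y) j))"
proof -
  have dv: "A y div B y = monom (c y) d + A' y div B y" for y
    using Bnz eq by simp
  have md: "A y mod B y = A' y mod B y" for y
    using Bnz eq by simp
  have "polyfun (\<lambda>y. coeff (A y div B y) j)" for j
  proof -
    have "(\<lambda>y. coeff (A y div B y) j) = (\<lambda>y. (if d = j then c y else 0) + coeff (A' y div B y) j)"
      by (simp add: dv coeff_monom fun_eq_iff)
    moreover have "polyfun (\<lambda>y. (if d = j then c y else 0) + coeff (A' y div B y) j)"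
      using IH pc by (cases "d = j") (simp_all add: pf_add pf_const)
    ultimately show ?thesis by simp
  qed
  then show ?thesis using IH by (simp add: md)
qed

lemma pdivmod_pf:
  fixes A B :: "'a::euclidean_space \<Rightarrow> real poly"
  assumes Bc: "\<forall>j. polyfun (\<lambda>y. coeff (B y) j)" and Bd: "\<forall>y. degree (B y) = n"
    and Bh: "\<forall>y. coeff (B y) n = h" and h: "h \<noteq> 0"
  shows "(\<forall>j. polyfun (\<lambda>y. coeff (A y) j)) \<Longrightarrow> (\<forall>y. degree (A y) \<le> E)
     \<Longrightarrow> (\<forall>j. polyfun (\<lambda>y. coeff (A y div B y) j)) \<and> (\<forall>j. polyfun (\<lambda>y. coeff (A y mod B y) j))"
proof (induction E arbitrary: A)
  have Bnz: "\<forall>y. B y \<noteq> 0" using Bh h by (metis coeff_0)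
  {
    case 0
    show ?case
    proof (cases "n = 0")
      case False
      then have "degree (A y) < degree (B y)" for y using 0 Bd by (metis bot_nat_0.extremum_uniqueI not_gr_zero)
      then have "A y div B y = 0" "A y mod B y = A y" for y by (simp_all add: div_poly_less mod_poly_less)
      then show ?thesis using 0 by (simp add: pf_const)
    next
      case True
      define c where "c y = coeff (A y) 0 / h" for y
      have Bconst: "B y = [:h:]" for y using Bd Bh True degree_0_id[of "B y"] by simp
      have Aconst: "A y = [:coeff (A y) 0:]" for y using 0 degree_0_id[of "A y"] by simp
      have eq: "\<forall>y. A y = 0 + monom (c y) 0 * B y"
        using h by (auto simp: c_def Bconst monom_0 intro: Aconst[THEN trans])
      have pc: "polyfun c" unfolding c_def[abs_def] using 0 by (simp add: pf_div_const)
      show ?thesis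
        by (rule divmod_red[OF Bnz eq pc]) (simp add: pf_const)
    qed
  next
    case (Suc E)
    show ?case
    proof (cases "Suc E < n")
      case True
      then have "degree (A y) < degree (B y)" for y using Suc.prems Bd by (metis le_less_trans)
      then have "A y div B y = 0" "A y mod B y = A y" for y by (simp_all add: div_poly_less mod_poly_less)
      then show ?thesis using Suc.prems by (simp add: pf_const)
    next
      case False
      define c where "c y = coeff (A y) (Suc E) / h" for y
      define A' where "A' y = A y - monom (c y) (Suc E - n) * B y" for y
      have eq: "\<forall>y. A y = A' y + monom (c y) (Suc E - n) * B y" by (simp add: A'_def)
      have pc: "polyfun c" unfolding c_def[abs_def] using Suc.prems by (simp add: pf_div_const)
      have pA': "\<forall>j. polyfun (\<lambda>y. coeff (A' y) j)"
      proof
        fix j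
        have "(\<lambda>y. coeff (A' y) j) = (\<lambda>y. coeff (A y) j - (if j < Suc E - n then 0 else c y * coeff (B y) (j - (Suc E - n))))"
          by (simp add: A'_def coeff_monom_mult fun_eq_iff)
        moreover have "polyfun (\<lambda>y. coeff (A y) j - (if j < Suc E - n then 0 else c y * coeff (B y) (j - (Suc E - n))))"
          using Suc.prems Bc pc by (cases "j < Suc E - n") (simp_all add: pf_diff pf_mult pf_const)
        ultimately show "polyfun (\<lambda>y. coeff (A' y) j)" by simp
      qed
      have dA': "\<forall>y. degree (A' y) \<le> E"
      proof
        fix y
        show "degree (A' y) \<le> E"
        proof (rule degree_le, intro allI impI)
          fix i assume i: "E < i"
          show "coeff (A' y) i = 0"
          proof (cases "i = Suc E")
            case True
            then show ?thesis using False h Bh by (simp add: A'_def coeff_monom_mult c_def)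
          next
            case False
            then have i2: "Suc E < i" using i by simp
            then have "coeff (A y) i = 0" using Suc.prems(2) by (metis coeff_eq_0 le_less_trans)
            moreover have "coeff (B y) (i - (Suc E - n)) = 0"
              using Bd i2 \<open>\<not> Suc E < n\<close> by (intro coeff_eq_0) auto
            ultimately show ?thesis by (simp add: A'_def coeff_monom_mult)
          qed
        qed
      qed
      show ?thesis by (rule divmod_red[OF Bnz eq pc Suc.IH[OF pA' dA']])
    qed
  }
qed


definition LR :: "'a::euclidean_space \<Rightarrow> ('a \<Rightarrow> real) \<Rightarrow> 'a \<Rightarrow> real poly" where
  "LR v f y = (SOME p. \<forall>t. f (y + t *\<^sub>R v) = poly p t)"

lemma LR_eq: "polyfun f \<Longrightarrow> f (y + t *\<^sub>R v) = poly (LR v f y) t"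
  unfolding LR_def using someI_ex[OF pf_line[of f y v]] by blast

lemma LR_unique: assumes "\<forall>t. f (y + t *\<^sub>R v) = poly p t" shows "LR v f y = p"
proof -
  have "\<forall>t. f (y + t *\<^sub>R v) = poly (LR v f y) t" unfolding LR_def by (rule someI[of _ p]) (rule assms)
  then have "poly (LR v f y) = poly p" using assms by (simp add: fun_eq_iff)
  then show ?thesis using poly_eq_poly_eq_iff by blast
qed

lemma LR_pf:
  assumes "polyfun f"
  shows "(\<forall>j. polyfun (\<lambda>y. coeff (LR v f y) j)) \<and> (\<exists>E. \<forall>y. degree (LR v f y) \<le> E)"
proof -
  obtain n where n: "pd n f" using polyfun_pd[OF assms] by blast
  obtain P where P: "\<forall>y v t. f (y + t *\<^sub>R v) = poly (P y v) t" "\<forall>y v. degree (P y v) \<le> n"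
     "\<forall>j v. pd (n - j) (\<lambda>y. coeff (P y v) j)"
    using pd_expand[OF n] by blast
  have eq: "LR v f y = P y v" for y by (rule LR_unique) (use P(1) in blast)
  show ?thesis unfolding eq using P(2,3) pd_polyfun by blast
qed

lemma LR_zero: "LR v (\<lambda>_. 0) y = 0"
  by (rule LR_unique) simp

lemma LR_0: "polyfun f \<Longrightarrow> poly (LR v f y) 0 = f y"
  using LR_eq[of f y 0 v] by simp

lemma shift_rel:
  assumes I: "is_ideal (Kern_Eval R)" and q: "q \<in> Kern_Eval R" and qz: "\<forall>j>k. q j = (\<lambda>_. 0)"
  shows "(\<Sum>i\<le>k. q i x *\<^sub>R R (i + s) x) = 0"
proof -
  define mono where "mono i = (\<lambda>x::'a. if i = s then 1 else (0::real))" for i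
  have mp: "mono \<in> polyseq"
  proof -
    have "{i. mono i \<noteq> (\<lambda>_. 0)} \<subseteq> {s}" by (auto simp: mono_def)
    then have "finite {i. mono i \<noteq> (\<lambda>_. 0)}" by (rule finite_subset) simp
    moreover have "polyfun (mono i)" for i unfolding mono_def by (rule pf_const)
    ultimately show ?thesis by (simp add: polyseq_def)
  qed
  have pmK: "pmul mono q \<in> Kern_Eval R" using I mp q unfolding is_ideal_def by blast
  have pmv: "pmul mono q n x = (if s \<le> n then q (n - s) x else 0)" for n x
  proof -
    have "pmul mono q n x = (\<Sum>i\<le>n. if i = s then q (n - i) x else 0)"
      unfolding pmul_def mono_def by (intro sum.cong) auto
    also have "\<dots> = (if s \<le> n then q (n - s) x else 0)" by (simp add: sum.delta)
    finally show ?thesis .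
  qed
  have pmz: "\<forall>n\<ge>s + Suc k. pmul mono q n = (\<lambda>_. 0)"
  proof (intro allI impI)
    fix n assume "s + Suc k \<le> n"
    then have "n - s > k" by simp
    then show "pmul mono q n = (\<lambda>_. 0)" using qz by (auto simp: pmv fun_eq_iff)
  qed
  have "0 = Eval R (pmul mono q) x" using pmK unfolding Kern_Eval_def by simp
  also have "\<dots> = (\<Sum>n<s + Suc k. pmul mono q n x *\<^sub>R R n x)" by (rule fun_cong[OF Eval_fin[OF pmz]])
  also have "\<dots> = (\<Sum>n\<in>{0 + s..<Suc k + s}. q (n - s) x *\<^sub>R R n x)"
    by (rule sum.mono_neutral_cong_right) (auto simp: pmv)
  also have "\<dots> = (\<Sum>i\<in>{0..<Suc k}. q i x *\<^sub>R R (i + s) x)"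
    by (subst sum.shift_bounds_nat_ivl) simp
  also have "\<dots> = (\<Sum>i\<le>k. q i x *\<^sub>R R (i + s) x)" by (simp add: atLeast0LessThan lessThan_Suc_atMost)
  finally show ?thesis by simp
qed

lemma pf_prod_nz:
  assumes "finite S" "\<forall>j\<in>S. polyfun (f j) \<and> f j \<noteq> (\<lambda>_. 0)"
  shows "(\<lambda>x. \<Prod>j\<in>S. f j x) \<noteq> (\<lambda>_. 0)"
  using assms
proof (induction S rule: finite_induct)
  case empty then show ?case by (simp add: fun_eq_iff)
next
  case (insert a A)
  have IH: "(\<lambda>x. \<Prod>j\<in>A. f j x) \<noteq> (\<lambda>_. 0)" using insert by simp
  have pa: "polyfun (f a)" "f a \<noteq> (\<lambda>_. 0)" using insert by auto
  have pA: "polyfun (\<lambda>x. \<Prod>j\<in>A. f j x)" using insert by (intro pf_prod) auto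
  show ?case
  proof
    assume "(\<lambda>x. \<Prod>j\<in>insert a A. f j x) = (\<lambda>_. 0)"
    then have "\<And>x. f a x * (\<Prod>j\<in>A. f j x) = 0" using insert(2) by (metis prod.insert insert(1))
    then have "(\<lambda>x. \<Prod>j\<in>A. f j x) = (\<lambda>_. 0)" by (rule pf_domain'[OF pa(1) pA _ pa(2)])
    with IH show False by simp
  qed
qed


lemma monic_polyseq:
  assumes "\<forall>i\<in>{1..k}. polyfun (r i)"
  shows "monic_seq k r \<in> polyseq"
proof -
  have "polyfun (monic_seq k r j)" for j
  proof (cases "j < k")
    case True
    then have "k - j \<in> {1..k}" by auto
    then show ?thesis using True assms by (simp add: monic_seq_def)
  next
    case False then show ?thesis by (cases "j = k") (simp_all add: monic_seq_def pf_const)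
  qed
  moreover have "{j. monic_seq k r j \<noteq> (\<lambda>_. 0)} \<subseteq> {..k}"
    by (auto simp: monic_seq_def)
  then have "finite {j. monic_seq k r j \<noteq> (\<lambda>_. 0)}" by (rule finite_subset) simp
  ultimately show ?thesis by (simp add: polyseq_def)
qed

lemma monic_eval: "Eval R (monic_seq k r) = (\<lambda>x. \<Sum>j<Suc k. monic_seq k r j x *\<^sub>R R j x)"
  by (rule Eval_fin) (auto simp: monic_seq_def fun_eq_iff)

lemma main_H:
  fixes R :: "nat \<Rightarrow> 'a::euclidean_space \<Rightarrow> 'b::euclidean_space"
  assumes R: "\<forall>i. polyfun_vec (R i)" and I: "is_ideal (Kern_Eval R)"
  shows "\<exists>r. (\<forall>i\<in>{1..kmin R}. polyfun (r i)) \<and> monic_seq (kmin R) r \<in> Kern_Eval R"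
proof -
  define k where "k = kmin R"
  have Ak: "A_set R k = UNIV" unfolding k_def by (rule kmin_A)
  have "\<exists>r. (\<forall>i\<in>{1..k}. polyfun (r i)) \<and> monic_seq k r \<in> Kern_Eval R"
  proof (cases "k = 0")
    case True
    define r :: "nat \<Rightarrow> 'a \<Rightarrow> real" where "r = (\<lambda>i x. 0)"
    have R0: "R 0 x = 0" for x
    proof -
      have "x \<in> A_set R 0" using Ak True by simp
      then obtain c i where "i \<le> 0" "c i \<noteq> 0" "(\<Sum>i\<le>0. c i *\<^sub>R R i x) = 0" unfolding A_set_def by blast
      then show ?thesis by simp
    qed
    have ev: "Eval R (monic_seq 0 r) = (\<lambda>_. 0)" unfolding monic_eval by (simp add: monic_seq_def R0)
    have ps: "monic_seq 0 r \<in> polyseq" by (rule monic_polyseq) simp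
    show ?thesis using True ps ev unfolding Kern_Eval_def by (intro exI[of _ r]) simp
  next
    case False
    then have k1: "k \<ge> 1" by simp
    obtain x0 where x0: "x0 \<notin> A_set R (k - 1)" using kmin_notA[of R] k1 unfolding k_def by blast
    have D0: "gD R k x0 \<noteq> 0" using gD_at_x0[OF R x0 k1] by simp
    have ek: "gse R k = (\<lambda>_. 0)" by (rule ek_zero[OF R Ak D0])
    obtain g where g: "\<forall>l. polyfun (g l)" "\<forall>x. gse R k x = gD R k x *\<^sub>R R k x + (\<Sum>l<k. g l x *\<^sub>R R l x)"
      using gse_comb[OF R, of k] by blast
    define q where "q j = (if j < k then g j else if j = k then gD R k else (\<lambda>_. 0))" for j
    have pq: "polyfun (q j)" for j by (simp add: q_def g(1) gD_pf[OF R] pf_const)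
    have qz: "\<forall>j>k. q j = (\<lambda>_. 0)" by (simp add: q_def)
    have qz': "\<forall>j\<ge>Suc k. q j = (\<lambda>_. 0)" by (simp add: q_def)
    have q_ps: "q \<in> polyseq"
    proof -
      have "{j. q j \<noteq> (\<lambda>_. 0)} \<subseteq> {..k}" using qz by (auto simp: not_le[symmetric])
      then have "finite {j. q j \<noteq> (\<lambda>_. 0)}" by (rule finite_subset) simp
      then show ?thesis using pq by (simp add: polyseq_def)
    qed
    have q_sum: "(\<Sum>j<Suc k. q j x *\<^sub>R R j x) = gse R k x" for x
    proof -
      have "(\<Sum>j<Suc k. q j x *\<^sub>R R j x) = (\<Sum>j<k. q j x *\<^sub>R R j x) + q k x *\<^sub>R R k x" by simp
      also have "(\<Sum>j<k. q j x *\<^sub>R R j x) = (\<Sum>j<k. g j x *\<^sub>R R j x)"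
        by (rule sum.cong) (auto simp: q_def)
      finally show ?thesis using g(2) by (simp add: q_def)
    qed
    have q_eval: "Eval R q = (\<lambda>_. 0)"
      unfolding Eval_fin[OF qz'] q_sum ek by simp
    have qK: "q \<in> Kern_Eval R" using q_ps q_eval by (simp add: Kern_Eval_def)
    have rel: "(\<Sum>i\<le>k. q i x *\<^sub>R R (i + s) x) = 0" for x s by (rule shift_rel[OF I qK qz])
    define W where "W n x = gse R (k - 1) x \<bullet> R n x" for n x
    have pW: "polyfun (W n)" for n unfolding W_def[abs_def]
      by (rule pf_inner[OF gse_pfv[OF R]]) (use R in simp)
    have Dk1: "gD R (k - 1) x0 \<noteq> 0" using gD_mono_nz[OF D0] by simp
    have W0: "W m = (\<lambda>_. 0)" if "m < k - 1" for m
      using perp_global[OF R Dk1 that] by (simp add: W_def fun_eq_iff)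
    have Wk: "W (k - 1) x0 \<noteq> 0"
    proof -
      have "gD R (Suc (k - 1)) x0 \<noteq> 0" using D0 k1 by simp
      then show ?thesis using gse_R_nz[OF R] by (simp add: W_def)
    qed
    have Wrec: "(\<Sum>i\<le>k. q i x * W (i + s) x) = 0" for x s
    proof -
      have "(\<Sum>i\<le>k. q i x * W (i + s) x) = gse R (k - 1) x \<bullet> (\<Sum>i\<le>k. q i x *\<^sub>R R (i + s) x)"
        by (simp add: W_def inner_sum_right)
      then show ?thesis using rel by simp
    qed
    have Dnz: "gD R k \<noteq> (\<lambda>_. 0)" using D0 by auto
    obtain v n h PB where dir: "h \<noteq> 0" "\<forall>y t. gD R k (y + t *\<^sub>R v) = poly (PB y) t"
      "\<forall>y. degree (PB y) = n \<and> coeff (PB y) n = h" "\<forall>j. polyfun (\<lambda>y. coeff (PB y) j)"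
      using good_direction[OF gD_pf[OF R] Dnz] by blast
    define B where "B y = LR v (gD R k) y" for y
    have B_eq: "B y = PB y" for y unfolding B_def by (rule LR_unique) (use dir(2) in blast)
    define A where "A i y = LR v (q i) y" for i y
    have divmod: "(\<forall>j. polyfun (\<lambda>y. coeff (A i y div B y) j)) \<and> (\<forall>j. polyfun (\<lambda>y. coeff (A i y mod B y) j))" for i
    proof -
      obtain E where E: "\<forall>j. polyfun (\<lambda>y. coeff (A i y) j)" "\<forall>y. degree (A i y) \<le> E"
        using LR_pf[OF pq[of i], of v] unfolding A_def by blast
      have Bc: "\<forall>j. polyfun (\<lambda>y. coeff (PB y) j)" "\<forall>y. degree (PB y) = n" "\<forall>y. coeff (PB y) n = h"
        using dir by auto
      show ?thesis unfolding B_eq by (rule pdivmod_pf[OF Bc dir(1) E])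
    qed
    have gdvd: "B y dvd A i y" if yD: "gD R k y \<noteq> 0" and yW: "W (k - 1) y \<noteq> 0" and ik: "i \<le> k" for y i
    proof -
      define qL where "qL j = A j y" for j
      define WL where "WL m = LR v (W m) y" for m
      have qLk: "qL k \<noteq> 0"
      proof
        assume "qL k = 0"
        then have "poly (qL k) 0 = 0" by simp
        moreover have "poly (qL k) 0 = gD R k y" unfolding qL_def A_def using LR_0[OF pq[of k]] by (simp add: q_def)
        ultimately show False using yD by simp
      qed
      have WL0: "WL m = 0" if "m < k - 1" for m unfolding WL_def W0[OF that] by (rule LR_zero)
      have WLk: "WL (k - 1) \<noteq> 0"
      proof
        assume "WL (k - 1) = 0"
        then have "poly (WL (k - 1)) 0 = 0" by simp
        moreover have "poly (WL (k - 1)) 0 = W (k - 1) y" unfolding WL_def using LR_0[OF pW] by simp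
        ultimately show False using yW by simp
      qed
      have WLrec: "(\<Sum>i\<le>k. qL i * WL (i + s)) = 0" for s
      proof -
        have "poly (\<Sum>i\<le>k. qL i * WL (i + s)) t = poly 0 t" for t
        proof -
          have "poly (\<Sum>i\<le>k. qL i * WL (i + s)) t = (\<Sum>i\<le>k. q i (y + t *\<^sub>R v) * W (i + s) (y + t *\<^sub>R v))"
            unfolding poly_sum qL_def WL_def A_def
            by (intro sum.cong refl) (simp add: LR_eq[OF pq] LR_eq[OF pW])
          also have "\<dots> = 0" by (rule Wrec)
          finally show ?thesis by simp
        qed
        then have "poly (\<Sum>i\<le>k. qL i * WL (i + s)) = poly 0" by blast
        then show ?thesis using poly_eq_poly_eq_iff by blast
      qed
      have "qL k dvd qL i" by (rule gauss_rec[OF qLk k1 WL0 WLk WLrec ik])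
      moreover have "qL k = B y" unfolding qL_def A_def B_def by (simp add: q_def)
      ultimately show ?thesis by (simp add: qL_def)
    qed
    define F where "F y = gD R k y * W (k - 1) y" for y
    have pF: "polyfun F" unfolding F_def[abs_def] by (rule pf_mult[OF gD_pf[OF R] pW])
    have F0: "F x0 \<noteq> 0" using D0 Wk by (simp add: F_def)
    have mod0: "A i y mod B y = 0" if ik: "i \<le> k" for i y
    proof (rule poly_eqI)
      fix j
      have "F y' * coeff (A i y' mod B y') j = 0" for y'
      proof (cases "F y' = 0")
        case False
        then have "gD R k y' \<noteq> 0" "W (k - 1) y' \<noteq> 0" by (auto simp: F_def)
        then have "A i y' mod B y' = 0" using gdvd[OF _ _ ik] by simp
        then show ?thesis by simp
      qed simp
      then show "coeff (A i y mod B y) j = coeff 0 j"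
        using pf_domain[OF pF conjunct2[OF divmod[of i], rule_format, of j] _ F0] by simp
    qed
    define r where "r i y = coeff (A (k - i) y div B y) 0" for i y
    have pr: "polyfun (r i)" for i unfolding r_def[abs_def] using divmod by blast
    have qr: "q j y = gD R k y * r (k - j) y" if jk: "j \<le> k" for j y
    proof -
      have "A j y = (A j y div B y) * B y" using mod0[OF jk, of y] div_mult_mod_eq[of "A j y" "B y"] by simp
      then have "poly (A j y) 0 = poly (A j y div B y) 0 * poly (B y) 0" by (metis poly_mult)
      moreover have "poly (A j y) 0 = q j y" unfolding A_def using LR_0[OF pq] by simp
      moreover have "poly (B y) 0 = gD R k y" unfolding B_def using LR_0[OF gD_pf[OF R]] by simp
      moreover have "k - (k - j) = j" using jk by simp
      ultimately show ?thesis by (simp add: r_def poly_0_coeff_0 mult.commute)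
    qed
    define m where "m = monic_seq k r"
    have mq: "gD R k x * m j x = q j x" if "j \<le> k" for j x
    proof (cases "j = k")
      case True then show ?thesis by (simp add: m_def monic_seq_def q_def)
    next
      case False
      then have "j < k" using that by simp
      then show ?thesis using qr[OF that, of x] by (simp add: m_def monic_seq_def)
    qed
    have pfe: "polyfun_vec (\<lambda>x. \<Sum>j<Suc k. m j x *\<^sub>R R j x)"
      using monic_polyseq[of k r] pr R by (intro pfv_sum pfv_scale) (auto simp: m_def polyseq_def)
    have "gD R k x *\<^sub>R (\<Sum>j<Suc k. m j x *\<^sub>R R j x) = 0" for x
    proof -
      have "gD R k x *\<^sub>R (\<Sum>j<Suc k. m j x *\<^sub>R R j x) = (\<Sum>j<Suc k. (gD R k x * m j x) *\<^sub>R R j x)"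
        by (simp only: scaleR_sum_right scaleR_scaleR)
      also have "\<dots> = (\<Sum>j<Suc k. q j x *\<^sub>R R j x)"
        by (rule sum.cong) (auto simp: mq)
      also have "\<dots> = 0" using q_sum ek by simp
      finally show ?thesis .
    qed
    then have "(\<Sum>j<Suc k. m j x *\<^sub>R R j x) = 0" for x
      by (rule pfv_domain[OF gD_pf[OF R] pfe _ D0])
    then have "Eval R m = (\<lambda>_. 0)" unfolding m_def monic_eval by (simp add: m_def)
    moreover have "m \<in> polyseq" unfolding m_def using pr by (intro monic_polyseq) simp
    ultimately show ?thesis using pr unfolding Kern_Eval_def m_def by (intro exI[of _ r]) simp
  qed
  then show ?thesis unfolding k_def .
qed


lemma main_Z:
  fixes R :: "nat \<Rightarrow> 'a::euclidean_space \<Rightarrow> 'b::euclidean_space"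
  assumes R: "\<forall>i. polyfun_vec (R i)" and pc: "\<forall>i. polyfun (c i)"
    and s0: "\<forall>x. (\<Sum>i<kmin R. c i x *\<^sub>R R i x) = 0" and i: "i < kmin R"
  shows "c i = (\<lambda>_. 0)"
proof -
  define k where "k = kmin R"
  have k1: "k \<ge> 1" using i k_def by simp
  obtain x0 where x0: "x0 \<notin> A_set R (k - 1)" using kmin_notA[of R] k1 unfolding k_def by blast
  have D0: "gD R k x0 \<noteq> 0" using gD_at_x0[OF R x0 k1] by simp
  have s0': "\<forall>x. (\<Sum>i<k. c i x *\<^sub>R R i x) = 0" using s0 unfolding k_def .
  have i': "i < k" using i unfolding k_def .
  show ?thesis by (rule kern_zero[OF R D0 order.refl pc s0' i'])
qed

lemma pmul_pf: "(\<forall>i. polyfun (d i)) \<Longrightarrow> (\<forall>i. polyfun (c i)) \<Longrightarrow> polyfun (pmul d c n)"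
  unfolding pmul_def by (intro pf_sum pf_mult) auto

lemma fin_supp: "\<forall>i\<ge>(N::nat). f i = (\<lambda>_. 0) \<Longrightarrow> finite {i. f i \<noteq> (\<lambda>_. 0)}"
proof -
  assume h: "\<forall>i\<ge>N. f i = (\<lambda>_. 0)"
  have "{i. f i \<noteq> (\<lambda>_. 0)} \<subseteq> {..<N}"
  proof
    fix i assume "i \<in> {i. f i \<noteq> (\<lambda>_. 0)}"
    then have "\<not> N \<le> i" using h by auto
    then show "i \<in> {..<N}" by simp
  qed
  then show ?thesis by (rule finite_subset) simp
qed

lemma ex_bound: "c \<in> polyseq \<Longrightarrow> \<exists>N. \<forall>i\<ge>N. c i = (\<lambda>_. 0)"
proof -
  assume "c \<in> polyseq"
  then have "finite {i. c i \<noteq> (\<lambda>_. 0)}" by (simp add: polyseq_def)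
  then obtain N where "{i. c i \<noteq> (\<lambda>_. 0)} \<subseteq> {..<N}" using finite_nat_bounded by blast
  then have "c i = (\<lambda>_. 0)" if "N \<le> i" for i using that by auto
  then show ?thesis by blast
qed

lemma kern_char:
  fixes R :: "nat \<Rightarrow> 'a::euclidean_space \<Rightarrow> 'b::euclidean_space"
  assumes R: "\<forall>i. polyfun_vec (R i)" and I: "is_ideal (Kern_Eval R)"
    and PK: "monic_seq (kmin R) r \<in> Kern_Eval R"
  shows "Kern_Eval R = {pmul d (monic_seq (kmin R) r) | d. d \<in> polyseq}"
proof -
  define k where "k = kmin R"
  define P where "P = monic_seq k r"
  have PK': "P \<in> Kern_Eval R" using PK unfolding P_def k_def .
  have Pps: "P \<in> polyseq" using PK' by (simp add: Kern_Eval_def)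
  have pP: "\<forall>i. polyfun (P i)" using Pps by (simp add: polyseq_def)
  have zero_case: "c = pmul (\<lambda>i x. 0) P" if c: "c \<in> Kern_Eval R" and cz: "\<forall>i\<ge>k. c i = (\<lambda>_. 0)" for c
  proof -
    have pc: "\<forall>i. polyfun (c i)" using c by (simp add: Kern_Eval_def polyseq_def)
    have "Eval R c = (\<lambda>_. 0)" using c by (simp add: Kern_Eval_def)
    then have "\<forall>x. (\<Sum>i<kmin R. c i x *\<^sub>R R i x) = 0" using Eval_fin[OF cz[unfolded k_def], of R] by (simp add: fun_eq_iff)
    then have "c i = (\<lambda>_. 0)" if "i < k" for i using main_Z[OF R pc] that k_def by blast
    then have "c i = (\<lambda>_. 0)" for i using cz by (cases "i < k") auto
    then show ?thesis by (simp add: pmul_def fun_eq_iff)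
  qed
  have zps: "(\<lambda>i x. 0) \<in> polyseq" by (simp add: polyseq_def pf_const)
  have key: "\<And>c. c \<in> Kern_Eval R \<Longrightarrow> (\<forall>i\<ge>N. c i = (\<lambda>_. 0)) \<Longrightarrow> \<exists>d\<in>polyseq. c = pmul d P" for N
  proof (induction N)
    case 0
    then have "\<forall>i\<ge>k. c i = (\<lambda>_. 0)" by simp
    then have "c = pmul (\<lambda>i x. 0) P" by (rule zero_case[OF 0(1)])
    then show ?case using zps by (rule_tac bexI)
  next
    case (Suc N)
    fix c assume c: "c \<in> Kern_Eval R" and cz: "\<forall>i\<ge>Suc N. c i = (\<lambda>_. 0)"
    show "\<exists>d\<in>polyseq. c = pmul d P"
    proof (cases "Suc N \<le> k")
      case True
      then have "\<forall>i\<ge>k. c i = (\<lambda>_. 0)" using cz by simp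
      then have "c = pmul (\<lambda>i x. 0) P" by (rule zero_case[OF c])
      then show ?thesis using zps by (rule_tac bexI)
    next
      case False
      then have Nk: "k \<le> N" by simp
      have pc: "\<forall>i. polyfun (c i)" using c by (simp add: Kern_Eval_def polyseq_def)
      define a where "a = c N"
      define m0 where "m0 = N - k"
      define mono where "mono i = (\<lambda>x. if i = m0 then a x else 0)" for i
      have pmono: "polyfun (mono i)" for i
        unfolding mono_def a_def by (cases "i = m0") (simp_all add: pc pf_const)
      have mps: "mono \<in> polyseq"
      proof -
        have "\<forall>i\<ge>Suc m0. mono i = (\<lambda>_. 0)" by (simp add: mono_def)
        then show ?thesis using pmono fin_supp by (simp add: polyseq_def)
      qed
      define pm where "pm = pmul mono P"
      have pmK: "pm \<in> Kern_Eval R" using I mps PK' unfolding is_ideal_def pm_def by blast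
      have pmv: "pm n x = (if m0 \<le> n then a x * P (n - m0) x else 0)" for n x
      proof -
        have "pm n x = (\<Sum>i\<le>n. if i = m0 then a x * P (n - i) x else 0)"
          unfolding pm_def pmul_def mono_def by (intro sum.cong) auto
        also have "\<dots> = (if m0 \<le> n then a x * P (n - m0) x else 0)" by (simp add: sum.delta)
        finally show ?thesis .
      qed
      have Pz: "P j x = 0" if "j > k" for j x using that by (simp add: P_def monic_seq_def)
      have Pk: "P k x = 1" for x by (simp add: P_def monic_seq_def)
      have pmz: "\<forall>i\<ge>Suc N. pm i = (\<lambda>_. 0)"
      proof (intro allI impI ext)
        fix i x assume "Suc N \<le> i"
        then have "i - m0 > k" using Nk by (simp add: m0_def)
        then show "pm i x = 0" using Pz by (simp add: pmv)
      qed
      define c' where "c' i = (\<lambda>x. c i x - pm i x)" for i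
      have pc': "polyfun (c' i)" for i
        unfolding c'_def pm_def using pc pmono pP by (intro pf_diff pmul_pf) auto
      have c'z: "\<forall>i\<ge>Suc N. c' i = (\<lambda>_. 0)" using cz pmz by (simp add: c'_def fun_eq_iff)
      have Ec: "Eval R c = (\<lambda>x. \<Sum>i<Suc N. c i x *\<^sub>R R i x)" by (rule Eval_fin[OF cz])
      have Epm: "Eval R pm = (\<lambda>x. \<Sum>i<Suc N. pm i x *\<^sub>R R i x)" by (rule Eval_fin[OF pmz])
      have Ec': "Eval R c' = (\<lambda>x. \<Sum>i<Suc N. c' i x *\<^sub>R R i x)" by (rule Eval_fin[OF c'z])
      have "Eval R c' = (\<lambda>x. Eval R c x - Eval R pm x)"
        unfolding Ec Epm Ec' c'_def by (simp add: scaleR_diff_left sum_subtractf)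
      then have "Eval R c' = (\<lambda>_. 0)" using c pmK by (simp add: Kern_Eval_def)
      moreover have "c' \<in> polyseq" using pc' fin_supp[OF c'z] by (simp add: polyseq_def)
      ultimately have c'K: "c' \<in> Kern_Eval R" by (simp add: Kern_Eval_def)
      have c'N: "\<forall>i\<ge>N. c' i = (\<lambda>_. 0)"
      proof (intro allI impI ext)
        fix i x assume iN: "N \<le> i"
        show "c' i x = 0"
        proof (cases "i = N")
          case True
          have "N - m0 = k" using Nk by (simp add: m0_def)
          then show ?thesis using True by (simp add: c'_def pmv Pk a_def m0_def)
        next
          case False
          then show ?thesis using c'z iN by (simp add: fun_eq_iff)
        qed
      qed
      obtain d' where d': "d' \<in> polyseq" "c' = pmul d' P" using Suc.IH[OF c'K c'N] by blast
      define d where "d i = (\<lambda>x. d' i x + mono i x)" for i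
      have dps: "d \<in> polyseq"
      proof -
        obtain N1 where N1: "\<forall>i\<ge>N1. d' i = (\<lambda>_. 0)" using ex_bound[OF d'(1)] by blast
        have "\<forall>i\<ge>max N1 (Suc m0). d i = (\<lambda>_. 0)" using N1 by (simp add: d_def mono_def fun_eq_iff)
        moreover have "polyfun (d i)" for i using d'(1) pmono unfolding d_def polyseq_def
          by (intro pf_add) auto
        ultimately show ?thesis using fin_supp[of "max N1 (Suc m0)" d] by (simp add: polyseq_def)
      qed
      have "pmul d P = (\<lambda>n x. pmul d' P n x + pm n x)"
        unfolding pm_def pmul_def d_def by (simp add: fun_eq_iff distrib_right sum.distrib)
      also have "\<dots> = c"
      proof (intro ext)
        fix n x
        have "c' n x = pmul d' P n x" using d'(2) by simp
        then show "pmul d' P n x + pm n x = c n x" by (simp add: c'_def)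
      qed
      finally show ?thesis using dps by blast
    qed
  qed
  have "Kern_Eval R = {pmul d P | d. d \<in> polyseq}"
  proof (intro set_eqI iffI)
    fix c assume c: "c \<in> Kern_Eval R"
    obtain N where "\<forall>i\<ge>N. c i = (\<lambda>_. 0)" using ex_bound c by (auto simp: Kern_Eval_def)
    then show "c \<in> {pmul d P | d. d \<in> polyseq}" using key[OF c] by blast
  next
    fix c assume "c \<in> {pmul d P | d. d \<in> polyseq}"
    then obtain d where "d \<in> polyseq" "c = pmul d P" by blast
    then show "c \<in> Kern_Eval R" using I PK' unfolding is_ideal_def by blast
  qed
  then show ?thesis unfolding P_def k_def .
qed


lemma minrel_iff:
  fixes R :: "nat \<Rightarrow> 'a::euclidean_space \<Rightarrow> 'b::euclidean_space"
  assumes R: "\<forall>i. polyfun_vec (R i)" and pr: "\<forall>i\<in>{1..kmin R}. polyfun (r i)"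
    and PK: "monic_seq (kmin R) r \<in> Kern_Eval R"
    and ra: "\<forall>i\<in>{1..kmin R}. ratfun (a i)"
  shows "minrel R (kmin R) a \<longleftrightarrow> (\<forall>i\<in>{1..kmin R}. fst (a i) = (\<lambda>x. r i x * snd (a i) x))"
proof -
  define k where "k = kmin R"
  define p where "p i = fst (a i)" for i
  define qq where "qq i = snd (a i)" for i
  define Oth where "Oth i x = (\<Prod>j\<in>{1..k}-{i}. qq j x)" for i x
  define c where "c l = (if l < k then (\<lambda>x. Oth (k - l) x * (p (k - l) x - r (k - l) x * qq (k - l) x)) else (\<lambda>_. 0))" for l
  have pp: "polyfun (p i)" "polyfun (qq i)" "qq i \<noteq> (\<lambda>_. 0)" if "i \<in> {1..k}" for i
    using ra that unfolding k_def p_def qq_def ratfun_def by auto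
  have pr': "polyfun (r i)" if "i \<in> {1..k}" for i using pr that k_def by simp
  have pO: "polyfun (Oth i)" for i unfolding Oth_def[abs_def] using pp(2) by (intro pf_prod) auto
  have Onz: "Oth i \<noteq> (\<lambda>_. 0)" for i unfolding Oth_def[abs_def] using pp(2,3) by (intro pf_prod_nz) auto
  have pc: "polyfun (c l)" for l
  proof (cases "l < k")
    case True
    then have "k - l \<in> {1..k}" by auto
    then show ?thesis using True pO pp pr' by (simp add: c_def pf_mult pf_diff)
  qed (simp add: c_def pf_const)
  have EvP: "R k x = - (\<Sum>i\<in>{1..k}. r i x *\<^sub>R R (k - i) x)" for x
  proof -
    have "0 = Eval R (monic_seq k r) x" using PK unfolding k_def Kern_Eval_def by simp
    also have "\<dots> = (\<Sum>j<Suc k. monic_seq k r j x *\<^sub>R R j x)" by (simp only: monic_eval)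
    also have "\<dots> = (\<Sum>j<k. monic_seq k r j x *\<^sub>R R j x) + R k x" by (simp add: monic_seq_def)
    also have "(\<Sum>j<k. monic_seq k r j x *\<^sub>R R j x) = (\<Sum>j<k. r (k - j) x *\<^sub>R R j x)"
      by (rule sum.cong) (auto simp: monic_seq_def)
    also have "\<dots> = (\<Sum>i\<in>{1..k}. r i x *\<^sub>R R (k - i) x)"
      by (rule sum.reindex_bij_witness[of _ "\<lambda>i. k - i" "\<lambda>j. k - j"]) auto
    finally show ?thesis by (simp add: add_eq_0_iff)
  qed
  have key: "(\<Prod>j\<in>{1..k}. qq j x) *\<^sub>R R k x + (\<Sum>i\<in>{1..k}. (p i x * Oth i x) *\<^sub>R R (k - i) x)
      = (\<Sum>l<k. c l x *\<^sub>R R l x)" for x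
  proof -
    have Pa: "(\<Prod>j\<in>{1..k}. qq j x) = qq i x * Oth i x" if "i \<in> {1..k}" for i
      unfolding Oth_def using that by (simp add: prod.remove)
    have "(\<Prod>j\<in>{1..k}. qq j x) *\<^sub>R R k x = - (\<Sum>i\<in>{1..k}. ((\<Prod>j\<in>{1..k}. qq j x) * r i x) *\<^sub>R R (k - i) x)"
      unfolding EvP by (simp add: scaleR_sum_right)
    also have "\<dots> = - (\<Sum>i\<in>{1..k}. (Oth i x * (r i x * qq i x)) *\<^sub>R R (k - i) x)"
    proof (rule arg_cong[where f = uminus], rule sum.cong[OF refl])
      fix i assume "i \<in> {1..k}"
      then have e: "(\<Prod>j\<in>{1..k}. qq j x) = qq i x * Oth i x" by (rule Pa)
      show "((\<Prod>j\<in>{1..k}. qq j x) * r i x) *\<^sub>R R (k - i) x = (Oth i x * (r i x * qq i x)) *\<^sub>R R (k - i) x"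
        unfolding e by (simp add: ac_simps)
    qed
    finally have F: "(\<Prod>j\<in>{1..k}. qq j x) *\<^sub>R R k x = - (\<Sum>i\<in>{1..k}. (Oth i x * (r i x * qq i x)) *\<^sub>R R (k - i) x)" .
    have X: "(\<Sum>i\<in>{1..k}. (Oth i x * (p i x - r i x * qq i x)) *\<^sub>R R (k - i) x)
      = (\<Sum>i\<in>{1..k}. (p i x * Oth i x) *\<^sub>R R (k - i) x) - (\<Sum>i\<in>{1..k}. (Oth i x * (r i x * qq i x)) *\<^sub>R R (k - i) x)"
      unfolding sum_subtractf[symmetric]
      by (rule sum.cong[OF refl]) (simp only: right_diff_distrib scaleR_diff_left mult.commute)
    have "(\<Prod>j\<in>{1..k}. qq j x) *\<^sub>R R k x + (\<Sum>i\<in>{1..k}. (p i x * Oth i x) *\<^sub>R R (k - i) x)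
       = (\<Sum>i\<in>{1..k}. (Oth i x * (p i x - r i x * qq i x)) *\<^sub>R R (k - i) x)"
      unfolding X F by simp
    also have "\<dots> = (\<Sum>l<k. c l x *\<^sub>R R l x)"
      by (rule sum.reindex_bij_witness[of _ "\<lambda>l. k - l" "\<lambda>i. k - i"]) (auto simp: c_def)
    finally show ?thesis .
  qed
  have mr: "minrel R k a \<longleftrightarrow> (\<forall>x. (\<Sum>l<k. c l x *\<^sub>R R l x) = 0)"
    unfolding minrel_def key[symmetric] p_def qq_def Oth_def by simp
  have "minrel R k a \<longleftrightarrow> (\<forall>i\<in>{1..k}. p i = (\<lambda>x. r i x * qq i x))"
  proof
    assume "minrel R k a"
    then have s0: "\<forall>x. (\<Sum>l<kmin R. c l x *\<^sub>R R l x) = 0" using mr k_def by simp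
    show "\<forall>i\<in>{1..k}. p i = (\<lambda>x. r i x * qq i x)"
    proof
      fix i assume i: "i \<in> {1..k}"
      then have l: "k - i < kmin R" "k - (k - i) = i" using k_def by auto
      have "c (k - i) = (\<lambda>_. 0)" by (rule main_Z[OF R allI[OF pc] s0 l(1)])
      then have "Oth i x * (p i x - r i x * qq i x) = 0" for x
        using l i k_def by (auto simp: c_def fun_eq_iff)
      then have "(\<lambda>x. p i x - r i x * qq i x) = (\<lambda>_. 0)"
        by (rule pf_domain'[OF pO pf_diff[OF pp(1)[OF i] pf_mult[OF pr'[OF i] pp(2)[OF i]]] _ Onz])
      then show "p i = (\<lambda>x. r i x * qq i x)" by (simp add: fun_eq_iff)
    qed
  next
    assume h: "\<forall>i\<in>{1..k}. p i = (\<lambda>x. r i x * qq i x)"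
    have "c l x = 0" for l x
    proof (cases "l < k")
      case True
      then have "k - l \<in> {1..k}" by auto
      then show ?thesis using h True by (simp add: c_def)
    qed (simp add: c_def)
    then show "minrel R k a" using mr by simp
  qed
  then show ?thesis unfolding k_def p_def qq_def .
qed

theorem mainTheorem8:
  fixes R :: "nat \<Rightarrow> 'a::euclidean_space \<Rightarrow> 'b::euclidean_space"
  assumes "\<forall>i. polyfun_vec (R i)"
    and "is_ideal (Kern_Eval R)"
  shows "\<exists>r. (\<forall>i\<in>{1..kmin R}. polyfun (r i))
    \<and> (\<forall>a. (\<forall>i\<in>{1..kmin R}. ratfun (a i)) \<longrightarrow>
          (minrel R (kmin R) a \<longleftrightarrow> (\<forall>i\<in>{1..kmin R}. fst (a i) = (\<lambda>x. r i x * snd (a i) x))))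
    \<and> Kern_Eval R = {pmul d (monic_seq (kmin R) r) | d. d \<in> polyseq}"
proof -
  obtain r where r: "\<forall>i\<in>{1..kmin R}. polyfun (r i)" "monic_seq (kmin R) r \<in> Kern_Eval R"
    using main_H[OF assms] by blast
  have m: "\<forall>a. (\<forall>i\<in>{1..kmin R}. ratfun (a i)) \<longrightarrow>
          (minrel R (kmin R) a \<longleftrightarrow> (\<forall>i\<in>{1..kmin R}. fst (a i) = (\<lambda>x. r i x * snd (a i) x)))"
  proof (intro allI impI)
    fix a :: "nat \<Rightarrow> ('a \<Rightarrow> real) \<times> ('a \<Rightarrow> real)"
    assume "\<forall>i\<in>{1..kmin R}. ratfun (a i)"
    then show "minrel R (kmin R) a \<longleftrightarrow> (\<forall>i\<in>{1..kmin R}. fst (a i) = (\<lambda>x. r i x * snd (a i) x))"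
      by (rule minrel_iff[OF assms(1) r])
  qed
  show ?thesis
    by (rule exI[of _ r]) (intro conjI r(1) m kern_char[OF assms r(2)])
qed


end
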